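(* Let $h\le p$ and $W^\star\in\mathbb R^{h\times p}$ have mutually orthogonal nonzero rows, with all singular values in $[\alpha,\beta]$, $0<\alpha\le\beta$. Let $\sigma$ be differentiable and $\mathbf x\sim\mathcal N(0,I_p)$. Then the covariance matrix of $\sigma'(W^\star\mathbf x)\otimes\mathbf x\in\mathbb R^{hp}$ satisfies $\Sigma(\sigma'(W^\star\mathbf x)\otimes\mathbf x)\succeq\zeta(\alpha,\beta)I_{hp}$.
   Context: $\sigma'$ is applied entrywise; $\mathbf d\otimes\mathbf x$ concatenates $\mathbf d_1\mathbf x,\dots,\mathbf d_h\mathbf x$. For $g\sim\mathcal N(0,1)$ and $x\in\mathbb R$ let $\eta(x)=\sigma'(xg)$ (assume the relevant moments are finite). Define $\theta_1=\inf_{\alpha\le x,y\le\beta}\frac12\Big(\mathrm{var}[\eta(x)]+\mathrm{var}[\eta(y)]-\sqrt{(\mathrm{var}[\eta(x)]-\mathrm{var}[\eta(y)])^2+4\mathbb E[g\eta(x)]^2\mathbb E[g\eta(y)]^2}\Big)$, $\theta_2=\inf_{\alpha\le x\le\beta}\mathrm{var}[g\eta(x)]-\mathbb E[g^2\eta(x)]^2$, and $\zeta(\alpha,\beta)=\min\{\theta_1,\theta_2\}$. *)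

theory Defs
  imports "HOL-Probability.Probability"
begin

definition std_normal :: "real measure" where
  "std_normal = density lborel std_normal_density"

definition gauss_vec :: "nat \<Rightarrow> (nat \<Rightarrow> real) measure" where
  "gauss_vec p = PiM {..<p} (\<lambda>_. std_normal)"

definition Eg :: "(real \<Rightarrow> real) \<Rightarrow> real" where
  "Eg f = integral\<^sup>L std_normal f"

definition Varg :: "(real \<Rightarrow> real) \<Rightarrow> real" where
  "Varg f = Eg (\<lambda>g. (f g)\<^sup>2) - (Eg f)\<^sup>2"

definition eta :: "(real \<Rightarrow> real) \<Rightarrow> real \<Rightarrow> real \<Rightarrow> real" where
  "eta \<sigma> x g = deriv \<sigma> (x * g)"

definition theta1 :: "(real \<Rightarrow> real) \<Rightarrow> real \<Rightarrow> real \<Rightarrow> real" where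
  "theta1 \<sigma> \<alpha> \<beta> = Inf ((\<lambda>(x, y).
      (Varg (eta \<sigma> x) + Varg (eta \<sigma> y)
       - sqrt ((Varg (eta \<sigma> x) - Varg (eta \<sigma> y))\<^sup>2
               + 4 * (Eg (\<lambda>g. g * eta \<sigma> x g))\<^sup>2 * (Eg (\<lambda>g. g * eta \<sigma> y g))\<^sup>2)) / 2)
      ` ({\<alpha>..\<beta>} \<times> {\<alpha>..\<beta>}))"

definition theta2 :: "(real \<Rightarrow> real) \<Rightarrow> real \<Rightarrow> real \<Rightarrow> real" where
  "theta2 \<sigma> \<alpha> \<beta> = Inf ((\<lambda>x. Varg (\<lambda>g. g * eta \<sigma> x g) - (Eg (\<lambda>g. g\<^sup>2 * eta \<sigma> x g))\<^sup>2)
      ` {\<alpha>..\<beta>})"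

definition zeta :: "(real \<Rightarrow> real) \<Rightarrow> real \<Rightarrow> real \<Rightarrow> real" where
  "zeta \<sigma> \<alpha> \<beta> = min (theta1 \<sigma> \<alpha> \<beta>) (theta2 \<sigma> \<alpha> \<beta>)"

text \<open>Singular values of an h x p matrix W (h \<le> p), given as nat \<Rightarrow> nat \<Rightarrow> real with
  row indices < h and column indices < p: the nonnegative square roots of the eigenvalues
  of the h x h matrix W W^T.\<close>
definition singular_values :: "nat \<Rightarrow> nat \<Rightarrow> (nat \<Rightarrow> nat \<Rightarrow> real) \<Rightarrow> real set" where
  "singular_values h p W = {s. s \<ge> 0 \<and> (\<exists>v. (\<exists>i<h. v i \<noteq> 0) \<and>
      (\<forall>i<h. (\<Sum>j<h. (\<Sum>k<p. W i k * W j k) * v j) = s\<^sup>2 * v i))}"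

definition cov_matrix :: "'a measure \<Rightarrow> (nat \<Rightarrow> 'a \<Rightarrow> real) \<Rightarrow> nat \<Rightarrow> nat \<Rightarrow> real" where
  "cov_matrix M Z a b = integral\<^sup>L M (\<lambda>x. Z a x * Z b x)
                        - integral\<^sup>L M (Z a) * integral\<^sup>L M (Z b)"

definition loewner_ge_scalar :: "nat \<Rightarrow> (nat \<Rightarrow> nat \<Rightarrow> real) \<Rightarrow> real \<Rightarrow> bool" where
  "loewner_ge_scalar n A c \<longleftrightarrow>
     (\<forall>v. (\<Sum>a<n. \<Sum>b<n. v a * (A a b - (if a = b then c else 0)) * v b) \<ge> 0)"

text \<open>The random vector sigma'(W x) \<otimes> x in R^{hp}: component a = i*p + j (i < h, j < p)
  is sigma'(w_i . x) * x_j.\<close>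
definition kron_feature :: "nat \<Rightarrow> (real \<Rightarrow> real) \<Rightarrow> (nat \<Rightarrow> nat \<Rightarrow> real) \<Rightarrow> nat \<Rightarrow> (nat \<Rightarrow> real) \<Rightarrow> real" where
  "kron_feature p \<sigma> W a x = deriv \<sigma> (\<Sum>k<p. W (a div p) k * x k) * x (a mod p)"

end

theory Submission
  imports Defs
begin

lemma prob_space_std_normal: "prob_space std_normal"
  unfolding std_normal_def by (simp add: prob_space_normal_density)

lemma sets_std_normal[simp, measurable_cong]: "sets std_normal = sets borel"
  unfolding std_normal_def by simp

lemma space_std_normal[simp]: "space std_normal = UNIV"
  unfolding std_normal_def by simp

lemma measurable_std_normal1[simp]: "measurable std_normal M = measurable borel M"
  by (rule measurable_cong_sets) auto

definition DI :: "(real \<Rightarrow> real \<Rightarrow> ennreal) \<Rightarrow> ennreal" where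
  "DI P = (\<integral>\<^sup>+b. \<integral>\<^sup>+a. P a b \<partial>lborel \<partial>lborel)"

lemma DI_shear1:
  assumes P[measurable]: "(\<lambda>(a,b). P a b) \<in> borel_measurable (borel \<Otimes>\<^sub>M borel)"
  shows "DI (\<lambda>a b. P (a + t * b) b) = DI P"
  unfolding DI_def
proof (rule nn_integral_cong)
  fix b :: real
  have m: "(\<lambda>a. P a b) \<in> borel_measurable borel" by measurable
  show "(\<integral>\<^sup>+a. P (a + t * b) b \<partial>lborel) = (\<integral>\<^sup>+a. P a b \<partial>lborel)"
    using nn_integral_real_affine[OF m, of 1 "t*b"] by (simp add: add.commute)
qed

lemma DI_swap:
  assumes P[measurable]: "(\<lambda>(a,b). P a b) \<in> borel_measurable (borel \<Otimes>\<^sub>M borel)"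
  shows "DI P = (\<integral>\<^sup>+a. \<integral>\<^sup>+b. P a b \<partial>lborel \<partial>lborel)"
proof -
  have "sets (lborel \<Otimes>\<^sub>M lborel) = sets (borel \<Otimes>\<^sub>M (borel::real measure))"
    by (rule sets_pair_measure_cong) auto
  then have m: "(\<lambda>(a,b). P a b) \<in> borel_measurable (lborel \<Otimes>\<^sub>M lborel)"
    using P measurable_cong_sets by blast
  show ?thesis
    using pair_sigma_finite.Fubini'[of lborel lborel P, OF _ m]
    by (simp add: DI_def pair_sigma_finite_def lborel.sigma_finite_measure_axioms)
qed

lemma DI_shear2:
  assumes P[measurable]: "(\<lambda>(a,b). P a b) \<in> borel_measurable (borel \<Otimes>\<^sub>M borel)"
  shows "DI (\<lambda>a b. P a (b + t * a)) = DI P"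
proof -
  have P2: "(\<lambda>(a,b). P a (b + t * a)) \<in> borel_measurable (borel \<Otimes>\<^sub>M borel)" by measurable
  have "DI (\<lambda>a b. P a (b + t * a)) = (\<integral>\<^sup>+a. \<integral>\<^sup>+b. P a (b + t * a) \<partial>lborel \<partial>lborel)"
    by (rule DI_swap[OF P2])
  also have "\<dots> = (\<integral>\<^sup>+a. \<integral>\<^sup>+b. P a b \<partial>lborel \<partial>lborel)"
  proof (rule nn_integral_cong)
    fix a :: real
    have m: "(\<lambda>b. P a b) \<in> borel_measurable borel" by measurable
    show "(\<integral>\<^sup>+b. P a (b + t * a) \<partial>lborel) = (\<integral>\<^sup>+b. P a b \<partial>lborel)"
      using nn_integral_real_affine[OF m, of 1 "t*a"] by (simp add: add.commute)
  qed
  also have "\<dots> = DI P" by (rule DI_swap[OF P, symmetric])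
  finally show ?thesis .
qed

lemma DI_neg:
  assumes P[measurable]: "(\<lambda>(a,b). P a b) \<in> borel_measurable (borel \<Otimes>\<^sub>M borel)"
  shows "DI (\<lambda>a b. P (-a) (-b)) = DI P"
  unfolding DI_def
proof -
  have "(\<integral>\<^sup>+b. \<integral>\<^sup>+a. P (-a) (-b) \<partial>lborel \<partial>lborel) = (\<integral>\<^sup>+b. \<integral>\<^sup>+a. P a (-b) \<partial>lborel \<partial>lborel)"
  proof (rule nn_integral_cong)
    fix b :: real
    have m: "(\<lambda>a. P a (-b)) \<in> borel_measurable borel" by measurable
    show "(\<integral>\<^sup>+a. P (-a) (-b) \<partial>lborel) = (\<integral>\<^sup>+a. P a (-b) \<partial>lborel)"
      using nn_integral_real_affine[OF m, of "-1" 0] by simp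
  qed
  also have "\<dots> = (\<integral>\<^sup>+b. \<integral>\<^sup>+a. P a b \<partial>lborel \<partial>lborel)"
  proof -
    have m: "(\<lambda>b. \<integral>\<^sup>+a. P a b \<partial>lborel) \<in> borel_measurable borel" by measurable
    show ?thesis using nn_integral_real_affine[OF m, of "-1" 0] by simp
  qed
  finally show "(\<integral>\<^sup>+b. \<integral>\<^sup>+a. P (-a) (-b) \<partial>lborel \<partial>lborel) = (\<integral>\<^sup>+b. \<integral>\<^sup>+a. P a b \<partial>lborel \<partial>lborel)" .
qed

lemma DI_rot:
  assumes P[measurable]: "(\<lambda>(a,b). P a b) \<in> borel_measurable (borel \<Otimes>\<^sub>M borel)"
    and cs: "c\<^sup>2 + s\<^sup>2 = 1"
  shows "DI (\<lambda>a b. P (c * a + s * b) (- s * a + c * b)) = DI P"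
proof (cases "c = -1")
  case True
  then have "s = 0" using cs by (simp add: power2_eq_square)
  then show ?thesis using True DI_neg[OF P] by simp
next
  case False
  define t where "t = s / (1 + c)"
  have c1: "1 + c \<noteq> 0" using False by auto
  have ts: "1 - t * s = c" using cs c1 unfolding t_def
    by (simp add: field_simps power2_eq_square)
  define P1 where "P1 a b = P (a + t * b) b" for a b
  define P2 where "P2 a b = P1 a (b + (-s) * a)" for a b
  have m1[measurable]: "(\<lambda>(a,b). P1 a b) \<in> borel_measurable (borel \<Otimes>\<^sub>M borel)"
    unfolding P1_def by measurable
  have m2[measurable]: "(\<lambda>(a,b). P2 a b) \<in> borel_measurable (borel \<Otimes>\<^sub>M borel)"
    unfolding P2_def by measurable
  have eq: "(\<lambda>a b. P (c * a + s * b) (- s * a + c * b)) = (\<lambda>a b. P2 (a + t * b) b)"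
  proof (intro ext)
    fix a b :: real
    have e1: "a + t * b + t * (b + - s * (a + t * b)) = c * a + s * b"
    proof -
      have tc: "t * (1 + c) = s" using c1 unfolding t_def by simp
      have "a + t * b + t * (b + - s * (a + t * b)) = a * (1 - t * s) + t * b * (1 + (1 - s * t))"
        by (simp add: algebra_simps)
      also have "\<dots> = c * a + s * b"
      proof -
        have ts2: "1 - s * t = c" using ts by (simp add: mult.commute)
        have "t * b * (1 + (1 - s * t)) = (t * (1 + c)) * b" unfolding ts2 by simp
        then have X: "t * b * (1 + (1 - s * t)) = s * b" unfolding tc .
        have Y: "a * (1 - t * s) = c * a" using ts by simp
        show ?thesis using X Y by linarith
      qed
      finally show ?thesis .
    qed
    have e2: "b + - s * (a + t * b) = - s * a + c * b"
    proof -
      have C: "1 - s * t = c" using ts by (simp add: mult.commute)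
      have E: "b + - s * (a + t * b) = - s * a + (1 - s * t) * b" by (simp add: algebra_simps)
      show ?thesis using E unfolding C .
    qed
    show "P (c * a + s * b) (- s * a + c * b) = P2 (a + t * b) b"
      unfolding P2_def P1_def using e1 e2 by simp
  qed
  have "DI (\<lambda>a b. P2 (a + t * b) b) = DI P2" by (rule DI_shear1[OF m2])
  also have "DI P2 = DI P1" unfolding P2_def by (rule DI_shear2[OF m1])
  also have "DI P1 = DI P" unfolding P1_def by (rule DI_shear1[OF P])
  finally show ?thesis using eq by simp
qed

lemma GI_as_DI:
  assumes F[measurable]: "(\<lambda>(a,b). F a b) \<in> borel_measurable (borel \<Otimes>\<^sub>M borel)"
  shows "(\<integral>\<^sup>+b. \<integral>\<^sup>+a. F a b \<partial>std_normal \<partial>std_normal)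
     = DI (\<lambda>a b. ennreal (std_normal_density a * std_normal_density b) * F a b)"
proof -
  have "(\<integral>\<^sup>+b. \<integral>\<^sup>+a. F a b \<partial>std_normal \<partial>std_normal)
      = (\<integral>\<^sup>+b. ennreal (std_normal_density b) * (\<integral>\<^sup>+a. ennreal (std_normal_density a) * F a b \<partial>lborel) \<partial>lborel)"
  proof -
    have i: "(\<integral>\<^sup>+a. F a b \<partial>std_normal) = (\<integral>\<^sup>+a. ennreal (std_normal_density a) * F a b \<partial>lborel)" for b
    proof -
      have m: "(\<lambda>a. F a b) \<in> borel_measurable borel" by measurable
      show ?thesis unfolding std_normal_def
        by (subst nn_integral_density) (use m in auto)
    qed
    have m2: "(\<lambda>b. \<integral>\<^sup>+a. ennreal (std_normal_density a) * F a b \<partial>lborel) \<in> borel_measurable borel"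
      by measurable
    show ?thesis unfolding i unfolding std_normal_def
      by (subst nn_integral_density) (use m2 in auto)
  qed
  also have "\<dots> = DI (\<lambda>a b. ennreal (std_normal_density a * std_normal_density b) * F a b)"
    unfolding DI_def
    by (intro nn_integral_cong, subst nn_integral_cmult[symmetric], measurable)
       (auto intro!: nn_integral_cong simp: ennreal_mult mult_ac)
  finally show ?thesis .
qed

lemma std_normal_density_rot:
  assumes cs: "c\<^sup>2 + s\<^sup>2 = 1"
  shows "std_normal_density (c * a + s * b) * std_normal_density (- s * a + c * b)
       = std_normal_density a * std_normal_density b"
proof -
  have sq: "(c * a + s * b)\<^sup>2 + (- s * a + c * b)\<^sup>2 = a\<^sup>2 + b\<^sup>2"
  proof -
    have "(c * a + s * b)\<^sup>2 + (- s * a + c * b)\<^sup>2 = (c\<^sup>2 + s\<^sup>2) * (a\<^sup>2 + b\<^sup>2)"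
      by (simp add: power2_eq_square algebra_simps)
    then show ?thesis using cs by simp
  qed
  have "\<And>x y. std_normal_density x * std_normal_density y = (1 / sqrt (2*pi))\<^sup>2 * exp (- (x\<^sup>2 + y\<^sup>2) / 2)"
    by (simp add: std_normal_density_def power2_eq_square exp_add[symmetric] field_simps)
  then show ?thesis using sq by simp
qed

lemma GI_rot:
  assumes F[measurable]: "(\<lambda>(a,b). F a b) \<in> borel_measurable (borel \<Otimes>\<^sub>M borel)"
    and cs: "c\<^sup>2 + s\<^sup>2 = 1"
  shows "(\<integral>\<^sup>+b. \<integral>\<^sup>+a. F (c * a + s * b) (- s * a + c * b) \<partial>std_normal \<partial>std_normal)
       = (\<integral>\<^sup>+b. \<integral>\<^sup>+a. F a b \<partial>std_normal \<partial>std_normal)"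
proof -
  define Q where "Q a b = ennreal (std_normal_density a * std_normal_density b) * F a b" for a b
  have Qm[measurable]: "(\<lambda>(a,b). Q a b) \<in> borel_measurable (borel \<Otimes>\<^sub>M borel)"
    unfolding Q_def by measurable
  have Fr: "(\<lambda>(a,b). F (c * a + s * b) (- s * a + c * b)) \<in> borel_measurable (borel \<Otimes>\<^sub>M borel)"
    by measurable
  have "(\<integral>\<^sup>+b. \<integral>\<^sup>+a. F (c * a + s * b) (- s * a + c * b) \<partial>std_normal \<partial>std_normal)
     = DI (\<lambda>a b. ennreal (std_normal_density a * std_normal_density b) * F (c * a + s * b) (- s * a + c * b))"
    by (rule GI_as_DI[OF Fr])
  also have "(\<lambda>a b. ennreal (std_normal_density a * std_normal_density b) * F (c * a + s * b) (- s * a + c * b))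
      = (\<lambda>a b. Q (c * a + s * b) (- s * a + c * b))"
    unfolding Q_def using std_normal_density_rot[OF cs] by simp
  also have "DI \<dots> = DI Q" by (rule DI_rot[OF Qm cs])
  also have "\<dots> = (\<integral>\<^sup>+b. \<integral>\<^sup>+a. F a b \<partial>std_normal \<partial>std_normal)"
    unfolding Q_def by (rule GI_as_DI[OF F, symmetric])
  finally show ?thesis .
qed

lemma distr_eq_from_nn:
  assumes T: "T \<in> M \<rightarrow>\<^sub>M M"
    and nn: "\<And>f. f \<in> borel_measurable M \<Longrightarrow> (\<integral>\<^sup>+x. f (T x) \<partial>M) = (\<integral>\<^sup>+x. f x \<partial>M)"
  shows "distr M M T = M"
proof (rule measure_eqI)
  show "sets (distr M M T) = sets M" by simp
  fix A assume A: "A \<in> sets (distr M M T)"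
  then have A': "A \<in> sets M" by simp
  have "emeasure (distr M M T) A = emeasure M (T -` A \<inter> space M)"
    by (rule emeasure_distr[OF T A'])
  also have "\<dots> = (\<integral>\<^sup>+x. indicator (T -` A \<inter> space M) x \<partial>M)"
    using measurable_sets[OF T A'] by simp
  also have "\<dots> = (\<integral>\<^sup>+x. indicator A (T x) \<partial>M)"
    by (intro nn_integral_cong) (auto simp: indicator_def)
  also have "\<dots> = (\<integral>\<^sup>+x. indicator A x \<partial>M)"
    by (rule nn) (use A' in simp)
  also have "\<dots> = emeasure M A" using A' by simp
  finally show "emeasure (distr M M T) A = emeasure M A" .
qed

lemma product_prob_space_std: "product_prob_space (\<lambda>_::nat. std_normal)"
  by (rule product_prob_spaceI) (rule prob_space_std_normal)

lemma psf_std: "product_sigma_finite (\<lambda>_::nat. std_normal)"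
  using product_prob_space_std unfolding product_prob_space_def by simp

lemma prob_space_gauss_vec: "prob_space (gauss_vec p)"
  unfolding gauss_vec_def by (rule prob_space_PiM) (rule prob_space_std_normal)

definition rotv :: "nat \<Rightarrow> nat \<Rightarrow> real \<Rightarrow> real \<Rightarrow> (nat \<Rightarrow> real) \<Rightarrow> (nat \<Rightarrow> real)" where
  "rotv j k c s x = (x(j := c * x j + s * x k))(k := - s * x j + c * x k)"

lemma measurable_std_normal2[simp]: "measurable M std_normal = measurable M borel"
  by (rule measurable_cong_sets) auto

lemma comp_meas: "j < p \<Longrightarrow> (\<lambda>x. x j) \<in> borel_measurable (PiM {..<p} (\<lambda>_. std_normal))"
  using measurable_component_singleton[of j "{..<p}" "\<lambda>_. std_normal"] by simp

lemma rotv_measurable: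
  assumes "j < p" "k < p"
  shows "rotv j k c s \<in> gauss_vec p \<rightarrow>\<^sub>M gauss_vec p"
proof -
  have I1: "{..<p} = {..<p} \<union> {j}" "{..<p} = {..<p} \<union> {k}" using assms by auto
  have m1: "(\<lambda>x. x(j := c * x j + s * x k)) \<in> PiM {..<p} (\<lambda>_. std_normal) \<rightarrow>\<^sub>M PiM {..<p} (\<lambda>_. std_normal)"
    apply (rule measurable_fun_upd[OF I1(1)])
    unfolding measurable_std_normal2 using assms
    by (auto intro!: borel_measurable_add borel_measurable_times measurable_const comp_meas)
  have m2: "(\<lambda>x. (x(j := c * x j + s * x k))(k := - s * x j + c * x k)) \<in> PiM {..<p} (\<lambda>_. std_normal) \<rightarrow>\<^sub>M PiM {..<p} (\<lambda>_. std_normal)"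
    apply (rule measurable_fun_upd[OF I1(2) m1])
    unfolding measurable_std_normal2 using assms
    by (auto intro!: borel_measurable_add borel_measurable_times measurable_const comp_meas)
  show ?thesis using m2 unfolding rotv_def gauss_vec_def .
qed


lemma nn_split2:
  fixes p j k :: nat
  assumes jk: "j < p" "k < p" "j \<noteq> k"
    and g[measurable]: "g \<in> borel_measurable (PiM {..<p} (\<lambda>_. std_normal))"
  shows "(\<integral>\<^sup>+x. g x \<partial>PiM {..<p} (\<lambda>_. std_normal))
    = (\<integral>\<^sup>+y. \<integral>\<^sup>+b. \<integral>\<^sup>+a. g ((y(k := b))(j := a)) \<partial>std_normal \<partial>std_normal \<partial>PiM ({..<p} - {j,k}) (\<lambda>_. std_normal))"
proof -
  define J where "J = {..<p} - {j,k}"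
  define K where "K = insert k J"
  have finJ: "finite J" "finite K" unfolding J_def K_def by (auto intro: finite_subset)
  have jK: "j \<notin> K" and kJ: "k \<notin> J" unfolding J_def K_def using jk by auto
  have pK: "{..<p} = insert j K" unfolding J_def K_def using jk by auto
  note PS = product_sigma_finite.product_nn_integral_insert[OF psf_std]
  have g': "g \<in> borel_measurable (PiM (insert j K) (\<lambda>_. std_normal))" using g pK by simp
  have "(\<integral>\<^sup>+x. g x \<partial>PiM {..<p} (\<lambda>_. std_normal))
     = (\<integral>\<^sup>+x. \<integral>\<^sup>+a. g (x(j := a)) \<partial>std_normal \<partial>PiM K (\<lambda>_. std_normal))"
    unfolding pK by (rule PS[OF finJ(2) jK g'])
  also have "\<dots> = (\<integral>\<^sup>+y. \<integral>\<^sup>+b. \<integral>\<^sup>+a. g ((y(k := b))(j := a)) \<partial>std_normal \<partial>std_normal \<partial>PiM J (\<lambda>_. std_normal))"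
  proof -
    have m: "(\<lambda>x. \<integral>\<^sup>+a. g (x(j := a)) \<partial>std_normal) \<in> borel_measurable (PiM (insert k J) (\<lambda>_. std_normal))"
    proof -
      have "(\<lambda>(x, a). g (x(j := a))) \<in> borel_measurable (PiM K (\<lambda>_. std_normal) \<Otimes>\<^sub>M std_normal)"
        using measurable_compose[OF measurable_add_dim[of j K "\<lambda>_. std_normal"] g'] by (simp add: case_prod_beta')
      from sigma_finite_measure.borel_measurable_nn_integral_fst[OF prob_space_imp_sigma_finite[OF prob_space_std_normal] this]
      have "(\<lambda>x. \<integral>\<^sup>+a. g (x(j := a)) \<partial>std_normal) \<in> borel_measurable (PiM K (\<lambda>_. std_normal))"
        by simp
      then show ?thesis unfolding K_def .
    qed
    show ?thesis unfolding K_def by (rule PS[OF finJ(1) kJ m])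
  qed
  finally show ?thesis unfolding J_def .
qed


lemma upd2_measurable:
  fixes p j k :: nat
  assumes jk: "j < p" "k < p" and y: "y \<in> space (PiM ({..<p} - {j,k}) (\<lambda>_. std_normal))"
  shows "(\<lambda>(a,b). (y(k := b))(j := a)) \<in> (borel \<Otimes>\<^sub>M borel) \<rightarrow>\<^sub>M PiM {..<p} (\<lambda>_. std_normal)"
proof -
  define J where "J = {..<p} - {j,k}"
  have I1: "insert k J = J \<union> {k}" by auto
  have I2: "{..<p} = insert k J \<union> {j}" unfolding J_def using jk by auto
  have m1: "(\<lambda>z. y(k := snd z)) \<in> (borel \<Otimes>\<^sub>M borel) \<rightarrow>\<^sub>M PiM (insert k J) (\<lambda>_. std_normal)"
    by (rule measurable_fun_upd[OF I1]) (use y in \<open>auto simp: J_def\<close>)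
  have m2: "(\<lambda>z. (y(k := snd z))(j := fst z)) \<in> (borel \<Otimes>\<^sub>M borel) \<rightarrow>\<^sub>M PiM {..<p} (\<lambda>_. std_normal)"
    by (rule measurable_fun_upd[OF I2 m1]) auto
  show ?thesis using m2 by (simp add: case_prod_beta')
qed

lemma rotv_nn:
  fixes p j k :: nat
  assumes jk: "j < p" "k < p" "j \<noteq> k" and cs: "c\<^sup>2 + s\<^sup>2 = 1"
    and f[measurable]: "f \<in> borel_measurable (gauss_vec p)"
  shows "(\<integral>\<^sup>+x. f (rotv j k c s x) \<partial>gauss_vec p) = (\<integral>\<^sup>+x. f x \<partial>gauss_vec p)"
proof -
  have f': "f \<in> borel_measurable (PiM {..<p} (\<lambda>_. std_normal))" using f unfolding gauss_vec_def .
  have fr: "(\<lambda>x. f (rotv j k c s x)) \<in> borel_measurable (PiM {..<p} (\<lambda>_. std_normal))"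
    using measurable_compose[OF rotv_measurable[OF jk(1,2)] f] unfolding gauss_vec_def .
  have "(\<integral>\<^sup>+x. f (rotv j k c s x) \<partial>gauss_vec p)
     = (\<integral>\<^sup>+y. \<integral>\<^sup>+b. \<integral>\<^sup>+a. f (rotv j k c s ((y(k := b))(j := a))) \<partial>std_normal \<partial>std_normal \<partial>PiM ({..<p} - {j,k}) (\<lambda>_. std_normal))"
    unfolding gauss_vec_def by (rule nn_split2[OF jk fr])
  also have "\<dots> = (\<integral>\<^sup>+y. \<integral>\<^sup>+b. \<integral>\<^sup>+a. f ((y(k := b))(j := a)) \<partial>std_normal \<partial>std_normal \<partial>PiM ({..<p} - {j,k}) (\<lambda>_. std_normal))"
  proof (rule nn_integral_cong)
    fix y assume y: "y \<in> space (PiM ({..<p} - {j,k}) (\<lambda>_. std_normal))"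
    define F where "F a b = f ((y(k := b))(j := a))" for a b
    have Fm: "(\<lambda>(a,b). F a b) \<in> borel_measurable (borel \<Otimes>\<^sub>M borel)"
      using measurable_compose[OF upd2_measurable[OF jk(1,2) y] f'] unfolding F_def
      by (simp add: case_prod_beta')
    have "\<And>a b. rotv j k c s ((y(k := b))(j := a)) = (y(k := - s * a + c * b))(j := c * a + s * b)"
      unfolding rotv_def using jk(3) by (auto simp: fun_eq_iff)
    then have "(\<integral>\<^sup>+b. \<integral>\<^sup>+a. f (rotv j k c s ((y(k := b))(j := a))) \<partial>std_normal \<partial>std_normal)
       = (\<integral>\<^sup>+b. \<integral>\<^sup>+a. F (c * a + s * b) (- s * a + c * b) \<partial>std_normal \<partial>std_normal)"
      unfolding F_def by simp
    also have "\<dots> = (\<integral>\<^sup>+b. \<integral>\<^sup>+a. F a b \<partial>std_normal \<partial>std_normal)"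
      by (rule GI_rot[OF Fm cs])
    finally show "(\<integral>\<^sup>+b. \<integral>\<^sup>+a. f (rotv j k c s ((y(k := b))(j := a))) \<partial>std_normal \<partial>std_normal)
       = (\<integral>\<^sup>+b. \<integral>\<^sup>+a. f ((y(k := b))(j := a)) \<partial>std_normal \<partial>std_normal)"
      unfolding F_def .
  qed
  also have "\<dots> = (\<integral>\<^sup>+x. f x \<partial>gauss_vec p)"
    unfolding gauss_vec_def by (rule nn_split2[OF jk f', symmetric])
  finally show ?thesis .
qed

lemma rotv_distr:
  fixes p j k :: nat
  assumes jk: "j < p" "k < p" "j \<noteq> k" and cs: "c\<^sup>2 + s\<^sup>2 = 1"
  shows "distr (gauss_vec p) (gauss_vec p) (rotv j k c s) = gauss_vec p"
  by (rule distr_eq_from_nn[OF rotv_measurable[OF jk(1,2)]]) (rule rotv_nn[OF jk cs])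

lemma std_normal_refl_nn:
  assumes g[measurable]: "g \<in> borel_measurable borel"
  shows "(\<integral>\<^sup>+a. g (- a) \<partial>std_normal) = (\<integral>\<^sup>+a. g a \<partial>std_normal)"
proof -
  have h: "(\<lambda>x. ennreal (std_normal_density x) * g x) \<in> borel_measurable borel" by measurable
  have "(\<integral>\<^sup>+a. g a \<partial>std_normal) = (\<integral>\<^sup>+a. ennreal (std_normal_density a) * g a \<partial>lborel)"
    unfolding std_normal_def by (subst nn_integral_density) auto
  also have "\<dots> = (\<integral>\<^sup>+a. ennreal (std_normal_density (-a)) * g (-a) \<partial>lborel)"
    using nn_integral_real_affine[OF h, of "-1" 0] by simp
  also have "\<dots> = (\<integral>\<^sup>+a. ennreal (std_normal_density a) * g (-a) \<partial>lborel)"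
    by (simp add: std_normal_density_def)
  also have "\<dots> = (\<integral>\<^sup>+a. g (- a) \<partial>std_normal)"
    unfolding std_normal_def by (subst nn_integral_density) auto
  finally show ?thesis by simp
qed

definition reflv :: "nat \<Rightarrow> (nat \<Rightarrow> real) \<Rightarrow> (nat \<Rightarrow> real)" where
  "reflv j x = x(j := - x j)"

lemma reflv_measurable:
  assumes "j < p"
  shows "reflv j \<in> gauss_vec p \<rightarrow>\<^sub>M gauss_vec p"
proof -
  have I1: "{..<p} = {..<p} \<union> {j}" using assms by auto
  have m1: "(\<lambda>x. x(j := - x j)) \<in> PiM {..<p} (\<lambda>_. std_normal) \<rightarrow>\<^sub>M PiM {..<p} (\<lambda>_. std_normal)"
    apply (rule measurable_fun_upd[OF I1])
    apply simp
    unfolding measurable_std_normal2 using assms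
    by (auto intro!: borel_measurable_uminus comp_meas)
  show ?thesis using m1 unfolding reflv_def gauss_vec_def .
qed

lemma reflv_nn:
  fixes p j :: nat
  assumes j: "j < p"
    and f[measurable]: "f \<in> borel_measurable (gauss_vec p)"
  shows "(\<integral>\<^sup>+x. f (reflv j x) \<partial>gauss_vec p) = (\<integral>\<^sup>+x. f x \<partial>gauss_vec p)"
proof -
  define K where "K = {..<p} - {j}"
  have finK: "finite K" unfolding K_def by (auto intro: finite_subset)
  have jK: "j \<notin> K" unfolding K_def by auto
  have pK: "{..<p} = insert j K" unfolding K_def using j by auto
  note PS = product_sigma_finite.product_nn_integral_insert[OF psf_std]
  have f': "f \<in> borel_measurable (PiM (insert j K) (\<lambda>_. std_normal))" using f pK unfolding gauss_vec_def by simp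
  have fr: "(\<lambda>x. f (reflv j x)) \<in> borel_measurable (PiM (insert j K) (\<lambda>_. std_normal))"
    using measurable_compose[OF reflv_measurable[OF j] f] pK unfolding gauss_vec_def by simp
  have "(\<integral>\<^sup>+x. f (reflv j x) \<partial>gauss_vec p)
     = (\<integral>\<^sup>+x. \<integral>\<^sup>+a. f (reflv j (x(j := a))) \<partial>std_normal \<partial>PiM K (\<lambda>_. std_normal))"
    unfolding gauss_vec_def pK by (rule PS[OF finK jK fr])
  also have "\<dots> = (\<integral>\<^sup>+x. \<integral>\<^sup>+a. f (x(j := a)) \<partial>std_normal \<partial>PiM K (\<lambda>_. std_normal))"
  proof (rule nn_integral_cong)
    fix x assume x: "x \<in> space (PiM K (\<lambda>_. std_normal))"
    have mx: "(\<lambda>a. x(j := a)) \<in> borel \<rightarrow>\<^sub>M PiM (insert j K) (\<lambda>_. std_normal)"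
      using measurable_component_update[OF x jK] by simp
    have g: "(\<lambda>a. f (x(j := a))) \<in> borel_measurable borel"
      using measurable_compose[OF mx f'] .
    have "\<And>a. reflv j (x(j := a)) = x(j := - a)" unfolding reflv_def by simp
    then show "(\<integral>\<^sup>+a. f (reflv j (x(j := a))) \<partial>std_normal) = (\<integral>\<^sup>+a. f (x(j := a)) \<partial>std_normal)"
      using std_normal_refl_nn[OF g] by simp
  qed
  also have "\<dots> = (\<integral>\<^sup>+x. f x \<partial>gauss_vec p)"
    unfolding gauss_vec_def pK by (rule PS[OF finK jK f', symmetric])
  finally show ?thesis .
qed

lemma reflv_distr:
  assumes "j < p"
  shows "distr (gauss_vec p) (gauss_vec p) (reflv j) = gauss_vec p"
  by (rule distr_eq_from_nn[OF reflv_measurable[OF assms]]) (rule reflv_nn[OF assms])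

definition dotp :: "nat \<Rightarrow> (nat \<Rightarrow> real) \<Rightarrow> (nat \<Rightarrow> real) \<Rightarrow> real" where
  "dotp p x y = (\<Sum>k<p. x k * y k)"

definition agree :: "nat \<Rightarrow> (nat \<Rightarrow> real) \<Rightarrow> (nat \<Rightarrow> real) \<Rightarrow> bool" where
  "agree p x y \<longleftrightarrow> (\<forall>m<p. x m = y m)"

definition ev :: "nat \<Rightarrow> nat \<Rightarrow> real" where
  "ev i = (\<lambda>k. if k = i then 1 else 0)"

definition good :: "nat \<Rightarrow> ((nat \<Rightarrow> real) \<Rightarrow> (nat \<Rightarrow> real)) \<Rightarrow> bool" where
  "good p T \<longleftrightarrow> T \<in> gauss_vec p \<rightarrow>\<^sub>M gauss_vec p \<and> distr (gauss_vec p) (gauss_vec p) T = gauss_vec p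
     \<and> (\<forall>x y. dotp p (T x) (T y) = dotp p x y) \<and> (\<forall>x y. agree p x y \<longrightarrow> agree p (T x) (T y))"

lemma agree_trans: "agree p x y \<Longrightarrow> agree p y z \<Longrightarrow> agree p x z"
  unfolding agree_def by auto

lemma agree_sym: "agree p x y \<Longrightarrow> agree p y x"
  unfolding agree_def by auto

lemma agree_refl[simp]: "agree p x x"
  unfolding agree_def by auto

lemma agree_dotp: "agree p x x' \<Longrightarrow> dotp p x y = dotp p x' y"
  unfolding agree_def dotp_def by (auto intro!: sum.cong)

lemma dotp_comm: "dotp p x y = dotp p y x"
  unfolding dotp_def by (auto intro!: sum.cong simp: mult.commute)

lemma dotp_ev: "i < p \<Longrightarrow> dotp p x (ev i) = x i"
  unfolding dotp_def ev_def by (simp add: if_distrib cong: if_cong)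

lemma good_id: "good p (\<lambda>x. x)"
  unfolding good_def by (simp add: distr_id[unfolded id_def])

lemma good_comp:
  assumes "good p T1" "good p T2"
  shows "good p (\<lambda>x. T2 (T1 x))"
proof -
  have m1: "T1 \<in> gauss_vec p \<rightarrow>\<^sub>M gauss_vec p" and m2: "T2 \<in> gauss_vec p \<rightarrow>\<^sub>M gauss_vec p"
    using assms unfolding good_def by auto
  have "distr (gauss_vec p) (gauss_vec p) (\<lambda>x. T2 (T1 x)) = distr (distr (gauss_vec p) (gauss_vec p) T1) (gauss_vec p) T2"
    using distr_distr[OF m2 m1] by (simp add: comp_def)
  also have "\<dots> = gauss_vec p" using assms unfolding good_def by simp
  finally show ?thesis using assms m1 m2 unfolding good_def by (auto intro: measurable_comp[OF m1 m2, unfolded comp_def])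
qed

lemma sum_two_out:
  fixes f :: "nat \<Rightarrow> real"
  assumes "j < p" "k < p" "j \<noteq> k"
  shows "(\<Sum>m<p. f m) = f j + f k + (\<Sum>m\<in>{..<p} - {j,k}. f m)"
proof -
  have "(\<Sum>m<p. f m) = f j + (\<Sum>m\<in>{..<p} - {j}. f m)"
    using assms by (subst sum.remove[of _ j]) auto
  also have "(\<Sum>m\<in>{..<p} - {j}. f m) = f k + (\<Sum>m\<in>{..<p} - {j} - {k}. f m)"
    using assms by (subst sum.remove[of _ k]) auto
  finally show ?thesis by (simp add: Diff_insert2[symmetric] insert_commute add.assoc)
qed

lemma good_rotv:
  assumes jk: "j < p" "k < p" "j \<noteq> k" and cs: "c\<^sup>2 + s\<^sup>2 = 1"
  shows "good p (rotv j k c s)"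
  unfolding good_def
proof (intro conjI allI impI)
  show "rotv j k c s \<in> gauss_vec p \<rightarrow>\<^sub>M gauss_vec p" by (rule rotv_measurable[OF jk(1,2)])
  show "distr (gauss_vec p) (gauss_vec p) (rotv j k c s) = gauss_vec p" by (rule rotv_distr[OF jk cs])
next
  fix x y
  have rj: "rotv j k c s z j = c * z j + s * z k" for z unfolding rotv_def using jk by simp
  have rk: "rotv j k c s z k = - s * z j + c * z k" for z unfolding rotv_def using jk by simp
  have ro: "m \<noteq> j \<Longrightarrow> m \<noteq> k \<Longrightarrow> rotv j k c s z m = z m" for z m unfolding rotv_def by simp
  have e: "(c * x j + s * x k) * (c * y j + s * y k) + (- s * x j + c * x k) * (- s * y j + c * y k)
      = x j * y j + x k * y k"
  proof -
    have "(c * x j + s * x k) * (c * y j + s * y k) + (- s * x j + c * x k) * (- s * y j + c * y k)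
      = (c\<^sup>2 + s\<^sup>2) * (x j * y j + x k * y k)" by (simp add: algebra_simps power2_eq_square)
    then show ?thesis using cs by simp
  qed
  show "dotp p (rotv j k c s x) (rotv j k c s y) = dotp p x y"
  proof -
    have A: "(\<Sum>m<p. rotv j k c s x m * rotv j k c s y m) = rotv j k c s x j * rotv j k c s y j + rotv j k c s x k * rotv j k c s y k + (\<Sum>m\<in>{..<p} - {j,k}. rotv j k c s x m * rotv j k c s y m)"
      by (rule sum_two_out[OF jk])
    have B: "(\<Sum>m<p. x m * y m) = x j * y j + x k * y k + (\<Sum>m\<in>{..<p} - {j,k}. x m * y m)"
      by (rule sum_two_out[OF jk])
    have C: "(\<Sum>m\<in>{..<p} - {j,k}. rotv j k c s x m * rotv j k c s y m) = (\<Sum>m\<in>{..<p} - {j,k}. x m * y m)"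
      by (intro sum.cong) (auto simp: ro)
    show ?thesis unfolding dotp_def A B C using e by (simp add: rj rk)
  qed
next
  fix x y assume "agree p x y"
  then show "agree p (rotv j k c s x) (rotv j k c s y)"
    unfolding agree_def rotv_def using jk by auto
qed

lemma good_reflv:
  assumes j: "j < p"
  shows "good p (reflv j)"
  unfolding good_def
proof (intro conjI allI impI)
  show "reflv j \<in> gauss_vec p \<rightarrow>\<^sub>M gauss_vec p" by (rule reflv_measurable[OF j])
  show "distr (gauss_vec p) (gauss_vec p) (reflv j) = gauss_vec p" by (rule reflv_distr[OF j])
next
  fix x y
  show "dotp p (reflv j x) (reflv j y) = dotp p x y"
    unfolding dotp_def reflv_def by (intro sum.cong) auto
next
  fix x y assume "agree p x y"
  then show "agree p (reflv j x) (reflv j y)"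
    unfolding agree_def reflv_def using j by auto
qed

lemma zero_step:
  fixes z :: "nat \<Rightarrow> real"
  assumes mp: "m < p" and z0: "\<forall>i<m. z i = 0"
  shows "m < q \<Longrightarrow> q \<le> p \<Longrightarrow> \<exists>R. good p R \<and> (\<forall>i<m. agree p (R (ev i)) (ev i))
     \<and> (\<forall>i<q. i \<noteq> m \<longrightarrow> R z i = 0) \<and> (\<forall>i. q \<le> i \<longrightarrow> i < p \<longrightarrow> R z i = z i)
     \<and> (R z m)\<^sup>2 = (\<Sum>i<q. (z i)\<^sup>2)"
proof (induction q)
  case 0 then show ?case by simp
next
  case (Suc q)
  show ?case
  proof (cases "q = m")
    case True
    have "(\<Sum>i<Suc m. (z i)\<^sup>2) = (z m)\<^sup>2"
      using z0 by (simp add: lessThan_Suc)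
    then show ?thesis using True z0 good_id
      by (intro exI[of _ "\<lambda>x. x"]) auto
  next
    case False
    then have mq: "m < q" and qp: "q < p" using Suc.prems by auto
    obtain R where R: "good p R" "\<forall>i<m. agree p (R (ev i)) (ev i)"
      "\<forall>i<q. i \<noteq> m \<longrightarrow> R z i = 0" "\<forall>i. q \<le> i \<longrightarrow> i < p \<longrightarrow> R z i = z i"
      "(R z m)\<^sup>2 = (\<Sum>i<q. (z i)\<^sup>2)"
      using Suc.IH[OF mq] qp by auto
    define a where "a = R z m"
    define b where "b = R z q"
    have bq: "b = z q" unfolding b_def using R(4) qp by auto
    define r where "r = sqrt (a\<^sup>2 + b\<^sup>2)"
    have sumq: "(\<Sum>i<Suc q. (z i)\<^sup>2) = a\<^sup>2 + b\<^sup>2"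
      using R(5) bq unfolding a_def by simp
    show ?thesis
    proof (cases "r = 0")
      case True
      then have "a\<^sup>2 + b\<^sup>2 = 0" unfolding r_def by simp
      then have ab: "a = 0" "b = 0" by (simp_all add: sum_power2_eq_zero_iff)
      show ?thesis
      proof (intro exI[of _ R] conjI)
        show "\<forall>i<Suc q. i \<noteq> m \<longrightarrow> R z i = 0"
          using R(3) ab(2) unfolding b_def by (auto simp: less_Suc_eq)
        show "\<forall>i. Suc q \<le> i \<longrightarrow> i < p \<longrightarrow> R z i = z i" using R(4) by auto
        show "(R z m)\<^sup>2 = (\<Sum>i<Suc q. (z i)\<^sup>2)" using sumq ab unfolding a_def by simp
      qed (use R in auto)
    next
      case False
      have "r \<ge> 0" unfolding r_def by simp
      then have r0: "r > 0" using False by linarith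
      have r2: "r\<^sup>2 = a\<^sup>2 + b\<^sup>2" unfolding r_def by simp
      define c where "c = a / r"
      define s where "s = b / r"
      have cs: "c\<^sup>2 + s\<^sup>2 = 1"
      proof -
        have "c\<^sup>2 + s\<^sup>2 = (a\<^sup>2 + b\<^sup>2) / r\<^sup>2" unfolding c_def s_def by (simp add: power_divide add_divide_distrib)
        also have "\<dots> = 1" using r2 r0 by (metis div_self less_numeral_extra(3) zero_less_power)
        finally show ?thesis .
      qed
      have gr: "good p (rotv m q c s)" by (rule good_rotv[OF mp qp mq[THEN less_imp_neq] cs])
      define R' where "R' = (\<lambda>x. rotv m q c s (R x))"
      have gR': "good p R'" unfolding R'_def by (rule good_comp[OF R(1) gr])
      have vm: "R' z m = r"
      proof -
        have "R' z m = c * a + s * b" unfolding R'_def rotv_def a_def b_def using mq by simp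
        also have "\<dots> = (a\<^sup>2 + b\<^sup>2) / r" unfolding c_def s_def by (simp add: power2_eq_square add_divide_distrib)
        also have "\<dots> = r\<^sup>2 / r" using r2 by simp
        also have "\<dots> = r" using r0 by (simp add: power2_eq_square)
        finally show ?thesis .
      qed
      have vq: "R' z q = 0"
        unfolding R'_def rotv_def a_def b_def c_def s_def using mq by (simp add: field_simps)
      have vo: "i \<noteq> m \<Longrightarrow> i \<noteq> q \<Longrightarrow> R' z i = R z i" for i
        unfolding R'_def rotv_def by simp
      show ?thesis
      proof (intro exI[of _ R'] conjI)
        show "good p R'" by (rule gR')
        show "\<forall>i<m. agree p (R' (ev i)) (ev i)"
        proof (intro allI impI)
          fix i assume i: "i < m"
          have "agree p (R' (ev i)) (rotv m q c s (ev i))"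
            using gr R(2) i unfolding R'_def good_def by blast
          moreover have "rotv m q c s (ev i) = ev i"
            unfolding rotv_def ev_def using i mq by (auto simp: fun_eq_iff)
          ultimately show "agree p (R' (ev i)) (ev i)" by simp
        qed
        show "\<forall>i<Suc q. i \<noteq> m \<longrightarrow> R' z i = 0"
          using R(3) vq vo by (auto simp: less_Suc_eq)
        show "\<forall>i. Suc q \<le> i \<longrightarrow> i < p \<longrightarrow> R' z i = z i" using R(4) vo mq by auto
        show "(R' z m)\<^sup>2 = (\<Sum>i<Suc q. (z i)\<^sup>2)" using vm r2 sumq by simp
      qed
    qed
  qed
qed

lemma ortho_T:
  fixes u :: "nat \<Rightarrow> nat \<Rightarrow> real"
  shows "h \<le> p \<Longrightarrow> (\<forall>i<h. \<forall>j<h. dotp p (u i) (u j) = (if i = j then 1 else 0))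
    \<Longrightarrow> \<exists>T. good p T \<and> (\<forall>i<h. agree p (T (u i)) (ev i))"
proof (induction h)
  case 0 then show ?case using good_id by auto
next
  case (Suc h)
  then have hp: "h < p" by simp
  obtain T' where T': "good p T'" "\<forall>i<h. agree p (T' (u i)) (ev i)"
    using Suc.IH Suc.prems by auto
  define z where "z = T' (u h)"
  have z0: "\<forall>i<h. z i = 0"
  proof (intro allI impI)
    fix i assume i: "i < h"
    have "z i = dotp p z (ev i)" using dotp_ev i hp by simp
    also have "\<dots> = dotp p (T' (u i)) z" using agree_dotp[OF T'(2)[rule_format, OF i]] by (simp add: dotp_comm)
    also have "\<dots> = dotp p (u i) (u h)" using T'(1) unfolding good_def z_def by simp
    also have "\<dots> = 0" using Suc.prems(2) i by auto
    finally show "z i = 0" .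
  qed
  have z1: "(\<Sum>i<p. (z i)\<^sup>2) = 1"
  proof -
    have "(\<Sum>i<p. (z i)\<^sup>2) = dotp p z z" unfolding dotp_def by (simp add: power2_eq_square)
    also have "\<dots> = dotp p (u h) (u h)" using T'(1) unfolding good_def z_def by simp
    also have "\<dots> = 1" using Suc.prems(2) by auto
    finally show ?thesis .
  qed
  obtain R where R: "good p R" "\<forall>i<h. agree p (R (ev i)) (ev i)"
      "\<forall>i<p. i \<noteq> h \<longrightarrow> R z i = 0" "(R z h)\<^sup>2 = 1"
    using zero_step[OF hp z0, of p] hp z1 by auto
  have RT: "good p (\<lambda>x. R (T' x))" by (rule good_comp[OF T'(1) R(1)])
  have old: "agree p (R (T' (u i))) (ev i)" if i: "i < h" for i
  proof -
    have "agree p (R (T' (u i))) (R (ev i))" using R(1) T'(2) i unfolding good_def by blast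
    then show ?thesis using R(2) i agree_trans by blast
  qed
  have Rh: "R z h = 1 \<or> R z h = -1" using R(4) by (simp add: power2_eq_1_iff)
  show ?case
  proof (cases "R z h = 1")
    case True
    show ?thesis
    proof (intro exI[of _ "\<lambda>x. R (T' x)"] conjI allI impI)
      show "good p (\<lambda>x. R (T' x))" by (rule RT)
      fix i assume i: "i < Suc h"
      show "agree p (R (T' (u i))) (ev i)"
      proof (cases "i = h")
        case True
        then show ?thesis using R(3) \<open>R z h = 1\<close> unfolding agree_def ev_def z_def by auto
      qed (use old i in auto)
    qed
  next
    case False
    then have m1: "R z h = -1" using Rh by simp
    have gF: "good p (\<lambda>x. reflv h (R (T' x)))" by (rule good_comp[OF RT good_reflv[OF hp]])
    show ?thesis
    proof (intro exI[of _ "\<lambda>x. reflv h (R (T' x))"] conjI allI impI)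
      show "good p (\<lambda>x. reflv h (R (T' x)))" by (rule gF)
      fix i assume i: "i < Suc h"
      show "agree p (reflv h (R (T' (u i)))) (ev i)"
      proof (cases "i = h")
        case True
        then show ?thesis using R(3) m1 unfolding agree_def ev_def z_def reflv_def by auto
      next
        case False
        then have ih: "i < h" using i by simp
        have "agree p (reflv h (R (T' (u i)))) (reflv h (ev i))"
          using good_reflv[OF hp] old[OF ih] unfolding good_def by blast
        moreover have "reflv h (ev i) = ev i" unfolding reflv_def ev_def using ih by (auto simp: fun_eq_iff)
        ultimately show ?thesis by simp
      qed
    qed
  qed
qed

lemma deriv_measurable:
  fixes \<sigma> :: "real \<Rightarrow> real"
  assumes diff: "\<forall>t. \<sigma> differentiable (at t)"
  shows "deriv \<sigma> \<in> borel_measurable borel"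
proof -
  have cont: "continuous_on UNIV \<sigma>"
    using diff differentiable_imp_continuous_within continuous_at_imp_continuous_on by blast
  then have sm: "\<sigma> \<in> borel_measurable borel" by (rule borel_measurable_continuous_onI)
  define u where "u n t = (\<sigma> (t + inverse (real (Suc n))) - \<sigma> t) / inverse (real (Suc n))" for n t
  show ?thesis
  proof (rule borel_measurable_LIMSEQ_real[where u=u])
    fix n show "u n \<in> borel_measurable borel" unfolding u_def
      using sm by measurable
  next
    fix t :: real
    have D: "DERIV \<sigma> t :> deriv \<sigma> t" using diff DERIV_deriv_iff_real_differentiable by blast
    then have lim: "((\<lambda>h. (\<sigma> (t + h) - \<sigma> t) / h) \<longlongrightarrow> deriv \<sigma> t) (at 0)" by (simp add: DERIV_def)
    have f: "filterlim (\<lambda>n. inverse (real (Suc n))) (at 0) sequentially"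
      unfolding filterlim_at using LIMSEQ_inverse_real_of_nat by auto
    show "(\<lambda>n. u n t) \<longlonglongrightarrow> deriv \<sigma> t"
      unfolding u_def using filterlim_compose[OF lim f] by simp
  qed
qed

lemma integrable_std_normal_pow: "integrable std_normal (\<lambda>t. t ^ n)"
  unfolding std_normal_def
  by (subst integrable_density) (auto simp: integrable_std_normal_moment)

lemma Eg_one: "Eg (\<lambda>_. 1) = 1"
  unfolding Eg_def using prob_space.prob_space[OF prob_space_std_normal] by simp

lemma Eg_id: "Eg (\<lambda>t. t) = 0"
proof -
  have "Eg (\<lambda>t. t) = integral\<^sup>L lborel (\<lambda>x. std_normal_density x * x ^ (2 * 0 + 1))"
    unfolding Eg_def std_normal_def by (subst integral_density) auto
  then show ?thesis using integral_std_normal_moment_odd[of 0] by simp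
qed

lemma Eg_sq: "Eg (\<lambda>t. t ^ 2) = 1"
proof -
  have "Eg (\<lambda>t. t ^ 2) = integral\<^sup>L lborel (\<lambda>x. std_normal_density x * x ^ (2 * 1))"
    unfolding Eg_def std_normal_def by (subst integral_density) auto
  then show ?thesis using integral_std_normal_moment_even[of 1] by simp
qed

lemma integrable_eta_pow:
  fixes H :: "real \<Rightarrow> real"
  assumes Hm: "H \<in> borel_measurable borel"
    and i0: "integrable std_normal (\<lambda>t. (H t)\<^sup>2)"
    and i2: "integrable std_normal (\<lambda>t. (t ^ 2 * H t)\<^sup>2)"
    and a: "a \<le> 2" and b: "b \<le> 2"
  shows "integrable std_normal (\<lambda>t. H t ^ a * t ^ b)"
proof -
  have tb': "\<bar>t\<bar> ^ n \<le> 1 + t ^ 4" if n: "n \<le> 4" for t :: real and n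
  proof (cases "\<bar>t\<bar> \<le> 1")
    case True
    then have "\<bar>t\<bar> ^ n \<le> 1" by (simp add: power_le_one)
    moreover have "0 \<le> t ^ 4" by (simp add: zero_le_even_power)
    ultimately show ?thesis by linarith
  next
    case False
    then have "\<bar>t\<bar> ^ n \<le> \<bar>t\<bar> ^ 4" using n by (intro power_increasing) auto
    then show ?thesis by (simp add: power_abs)
  qed
  have tb: "\<bar>t\<bar> ^ b \<le> 1 + t ^ 4" for t :: real using tb' b by simp
  have mH[measurable]: "H \<in> borel_measurable std_normal" using Hm by simp
  have meas: "(\<lambda>t. H t ^ a * t ^ b) \<in> borel_measurable std_normal" by measurable
  consider "a = 0" | "a = 1" | "a = 2" using a by linarith
  then show ?thesis
  proof cases
    case 1
    then show ?thesis using integrable_std_normal_pow by simp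
  next
    case 2
    have int: "integrable std_normal (\<lambda>t. (H t)\<^sup>2 + (1 + t ^ 4))"
      using i0 integrable_std_normal_pow[of 4] integrable_std_normal_pow[of 0]
      by (intro Bochner_Integration.integrable_add) auto
    show ?thesis
    proof (rule Bochner_Integration.integrable_bound[OF int meas])
      show "AE t in std_normal. norm (H t ^ a * t ^ b) \<le> norm ((H t)\<^sup>2 + (1 + t ^ 4))"
      proof (intro AE_I2)
        fix t :: real
        have "2 * (\<bar>H t\<bar> * \<bar>t\<bar> ^ b) \<le> (\<bar>H t\<bar>)\<^sup>2 + (\<bar>t\<bar> ^ b)\<^sup>2"
          using sum_squares_bound[of "\<bar>H t\<bar>" "\<bar>t\<bar> ^ b"] by (simp add: power2_eq_square)
        also have "(\<bar>t\<bar> ^ b)\<^sup>2 = \<bar>t\<bar> ^ (2 * b)" by (simp add: power_mult[symmetric] mult.commute)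
        also have "\<dots> \<le> 1 + t ^ 4" using tb' b by simp
        finally have X: "2 * (\<bar>H t\<bar> * \<bar>t\<bar> ^ b) \<le> (H t)\<^sup>2 + (1 + t ^ 4)" by simp
        have Y: "0 \<le> (H t)\<^sup>2 + (1 + t ^ 4)" by (simp add: zero_le_even_power add_nonneg_nonneg)
        have Z: "0 \<le> \<bar>H t\<bar> * \<bar>t\<bar> ^ b" by simp
        show "norm (H t ^ a * t ^ b) \<le> norm ((H t)\<^sup>2 + (1 + t ^ 4))"
        proof -
          have "\<bar>H t\<bar> * \<bar>t\<bar> ^ b \<le> (H t)\<^sup>2 + (1 + t ^ 4)" using X Y Z by linarith
          then show ?thesis using 2 by (simp add: abs_mult power_abs)
        qed
      qed
    qed
  next
    case 3
    have int: "integrable std_normal (\<lambda>t. (H t)\<^sup>2 + (t ^ 2 * H t)\<^sup>2)"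
      using i0 i2 by (intro Bochner_Integration.integrable_add)
    show ?thesis
    proof (rule Bochner_Integration.integrable_bound[OF int meas])
      show "AE t in std_normal. norm (H t ^ a * t ^ b) \<le> norm ((H t)\<^sup>2 + (t ^ 2 * H t)\<^sup>2)"
      proof (intro AE_I2)
        fix t :: real
        have "\<bar>t\<bar> ^ b \<le> 1 + t ^ 4" by (rule tb)
        then have "(H t)\<^sup>2 * \<bar>t\<bar> ^ b \<le> (H t)\<^sup>2 * (1 + t ^ 4)" by (intro mult_left_mono) auto
        moreover have "(H t)\<^sup>2 * (1 + t ^ 4) = (H t)\<^sup>2 + (t ^ 2 * H t)\<^sup>2" by (simp add: algebra_simps power2_eq_square power4_eq_xxxx)
        moreover have "norm (H t ^ a * t ^ b) = (H t)\<^sup>2 * \<bar>t\<bar> ^ b" using 3 by (simp add: abs_mult power_abs)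
        moreover have "norm ((H t)\<^sup>2 + (t ^ 2 * H t)\<^sup>2) = (H t)\<^sup>2 + (t ^ 2 * H t)\<^sup>2" by simp
        ultimately show "norm (H t ^ a * t ^ b) \<le> norm ((H t)\<^sup>2 + (t ^ 2 * H t)\<^sup>2)" by simp
      qed
    qed
  qed
qed

lemma gv_prod:
  assumes "\<And>m. m < p \<Longrightarrow> integrable std_normal (f m)"
  shows "integrable (gauss_vec p) (\<lambda>y. \<Prod>m<p. f m (y m))"
    and "integral\<^sup>L (gauss_vec p) (\<lambda>y. \<Prod>m<p. f m (y m)) = (\<Prod>m<p. Eg (f m))"
  using assms
  unfolding gauss_vec_def Eg_def
   apply (auto intro!: product_sigma_finite.product_integrable_prod[OF psf_std])[1]
  by (subst product_sigma_finite.product_integral_prod[OF psf_std]) (use assms in auto)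

definition na :: "nat \<Rightarrow> nat \<Rightarrow> nat \<Rightarrow> nat" where
  "na i j m = (if m = i then 1 else 0) + (if m = j then 1 else 0)"

definition Fm :: "(nat \<Rightarrow> real \<Rightarrow> real) \<Rightarrow> nat \<Rightarrow> nat \<Rightarrow> nat \<Rightarrow> nat \<Rightarrow> nat \<Rightarrow> real \<Rightarrow> real" where
  "Fm H i j k l m t = H m t ^ na i j m * t ^ na k l m"

definition Bp :: "(nat \<Rightarrow> real \<Rightarrow> real) \<Rightarrow> nat \<Rightarrow> nat \<Rightarrow> nat \<Rightarrow> nat \<Rightarrow> nat \<Rightarrow> (nat \<Rightarrow> real) \<Rightarrow> real" where
  "Bp H p i j k l y = (\<Prod>m<p. Fm H i j k l m (y m))"

definition KK :: "(nat \<Rightarrow> real \<Rightarrow> real) \<Rightarrow> nat \<Rightarrow> nat \<Rightarrow> nat \<Rightarrow> real" where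
  "KK H m a b = Eg (\<lambda>t. H m t ^ a * t ^ b)"

lemma pow_na: "(x::real) ^ na i j m = (if m = i then x else 1) * (if m = j then x else 1)"
  unfolding na_def by (simp add: power_add)

lemma Bp_eq:
  assumes "i < p" "j < p" "k < p" "l < p"
  shows "Bp H p i j k l y = H i (y i) * H j (y j) * y k * y l"
  unfolding Bp_def Fm_def pow_na prod.distrib using assms by (simp add: prod.delta)

lemma Bp_eq1:
  assumes "i < p" "k < p"
  shows "Bp H p i p k p y = H i (y i) * y k"
  unfolding Bp_def Fm_def pow_na prod.distrib using assms by (simp add: prod.delta)

lemma Fm_int:
  assumes hH: "\<And>m a b. m < h \<Longrightarrow> a \<le> 2 \<Longrightarrow> b \<le> 2 \<Longrightarrow> integrable std_normal (\<lambda>t. H m t ^ a * t ^ b)"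
    and i: "i < h" and j: "j < h \<or> p \<le> j" and m: "m < p"
  shows "integrable std_normal (Fm H i j k l m)"
proof (cases "m = i \<or> m = j")
  case True
  then have "m < h" using i j m by auto
  then show ?thesis unfolding Fm_def by (intro hH) (auto simp: na_def)
next
  case False
  then have "na i j m = 0" unfolding na_def by auto
  then show ?thesis unfolding Fm_def using integrable_std_normal_pow by simp
qed

lemma Bp_int_E:
  assumes hH: "\<And>m a b. m < h \<Longrightarrow> a \<le> 2 \<Longrightarrow> b \<le> 2 \<Longrightarrow> integrable std_normal (\<lambda>t. H m t ^ a * t ^ b)"
    and i: "i < h" and j: "j < h \<or> p \<le> j"
  shows "integrable (gauss_vec p) (Bp H p i j k l)"
    and "integral\<^sup>L (gauss_vec p) (Bp H p i j k l) = (\<Prod>m<p. KK H m (na i j m) (na k l m))"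
proof -
  have I: "\<And>m. m < p \<Longrightarrow> integrable std_normal (Fm H i j k l m)"
  proof -
    fix m assume m: "m < p"
    show "integrable std_normal (Fm H i j k l m)"
      by (intro Fm_int[of h H i j p m k l] hH) (use i j m in auto)
  qed
  show "integrable (gauss_vec p) (Bp H p i j k l)"
    using gv_prod(1)[OF I] unfolding Bp_def[abs_def] .
  show "integral\<^sup>L (gauss_vec p) (Bp H p i j k l) = (\<Prod>m<p. KK H m (na i j m) (na k l m))"
    using gv_prod(2)[OF I] unfolding Bp_def[abs_def] KK_def Fm_def[abs_def] .
qed

lemma KK00: "KK H m 0 0 = 1" unfolding KK_def using Eg_one by simp
lemma KK01: "KK H m 0 1 = 0" unfolding KK_def using Eg_id by simp
lemma KK01': "KK H m 0 (Suc 0) = 0" using KK01 by simp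
lemma KK02: "KK H m 0 2 = 1" unfolding KK_def using Eg_sq by simp
lemma KK02': "KK H m 0 (Suc (Suc 0)) = 1" using KK02 by (simp add: numeral_2_eq_2)

lemma prod_sub:
  fixes f :: "nat \<Rightarrow> real"
  assumes "S \<subseteq> {..<p}" "\<And>m. m < p \<Longrightarrow> m \<notin> S \<Longrightarrow> f m = 1"
  shows "(\<Prod>m<p. f m) = prod f S"
  using assms by (intro prod.mono_neutral_right) auto

lemma EB1:
  assumes i: "i < p" and k: "k < p"
  shows "(\<Prod>m<p. KK H m (na i p m) (na k p m)) = (if k = i then KK H i 1 1 else 0)"
proof (cases "k = i")
  case True
  have "(\<Prod>m<p. KK H m (na i p m) (na k p m)) = prod (\<lambda>m. KK H m (na i p m) (na k p m)) {i}"
    by (rule prod_sub) (use i True in \<open>auto simp: na_def KK00\<close>)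
  then show ?thesis using True i by (simp add: na_def)
next
  case False
  have fk: "KK H k (na i p k) (na k p k) = 0" using False k by (simp add: na_def KK01 KK01')
  have "(\<Prod>m<p. KK H m (na i p m) (na k p m)) = 0" by (rule prod_zero) (use fk k in auto)
  then show ?thesis using False by simp
qed

definition EBform :: "(nat \<Rightarrow> real \<Rightarrow> real) \<Rightarrow> nat \<Rightarrow> nat \<Rightarrow> nat \<Rightarrow> nat \<Rightarrow> real" where
  "EBform H i j k l =
     (if k = l then (if k = i then KK H i 1 2 else KK H i 1 0) * (if k = j then KK H j 1 2 else KK H j 1 0)
        + (if i = j then (if k = i then KK H i 2 2 - (KK H i 1 1)\<^sup>2 - (KK H i 1 2)\<^sup>2 else KK H i 2 0 - (KK H i 1 0)\<^sup>2) else 0)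
      else 0)
     + (if i \<noteq> j \<and> k = j \<and> l = i then KK H i 1 1 * KK H j 1 1 else 0)
     + (if k = i \<and> l = j then KK H i 1 1 * KK H j 1 1 else 0)"

lemma EB2:
  assumes i: "i < p" and j: "j < p" and k: "k < p" and l: "l < p"
  shows "(\<Prod>m<p. KK H m (na i j m) (na k l m)) = EBform H i j k l"
proof -
  let ?f = "\<lambda>m. KK H m (na i j m) (na k l m)"
  have zero: "(\<Prod>m<p. ?f m) = 0" if "m < p" "m \<noteq> i" "m \<noteq> j" "na k l m = 1" for m
  proof -
    have fm: "?f m = 0" using that by (simp add: na_def KK01 KK01')
    have "\<exists>a\<in>{..<p}. ?f a = 0" using fm that by (intro bexI[of _ m]) auto
    then show ?thesis by (rule prod_zero[rotated]) simp
  qed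
  show ?thesis
  proof (cases "k = l")
    case kl: True
    show ?thesis
    proof (cases "i = j")
      case ij: True
      show ?thesis
      proof (cases "k = i")
        case True
        have "(\<Prod>m<p. ?f m) = prod ?f {i}"
          by (rule prod_sub) (use i kl ij True in \<open>auto simp: na_def KK00\<close>)
        then show ?thesis using kl ij True by (simp add: na_def EBform_def numeral_2_eq_2 KK02' power2_eq_square)
      next
        case False
        have "(\<Prod>m<p. ?f m) = prod ?f {i, k}"
          by (rule prod_sub) (use i k kl ij False in \<open>auto simp: na_def KK00\<close>)
        then show ?thesis using kl ij False by (simp add: na_def EBform_def numeral_2_eq_2 KK02' power2_eq_square KK02)
      qed
    next
      case ij: False
      show ?thesis
      proof (cases "k = i")
        case True
        have "(\<Prod>m<p. ?f m) = prod ?f {i, j}"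
          by (rule prod_sub) (use i j kl ij True in \<open>auto simp: na_def KK00\<close>)
        then show ?thesis using kl ij True by (simp add: na_def EBform_def numeral_2_eq_2 KK02')
      next
        case ki: False
        show ?thesis
        proof (cases "k = j")
          case True
          have "(\<Prod>m<p. ?f m) = prod ?f {i, j}"
            by (rule prod_sub) (use i j kl ij True in \<open>auto simp: na_def KK00\<close>)
          then show ?thesis using kl ij True by (simp add: na_def EBform_def numeral_2_eq_2 KK02')
        next
          case kj: False
          have "(\<Prod>m<p. ?f m) = prod ?f {i, j, k}"
            by (rule prod_sub) (use i j k kl ij ki kj in \<open>auto simp: na_def KK00\<close>)
          then show ?thesis using kl ij ki kj by (simp add: na_def EBform_def numeral_2_eq_2 KK02' KK02)
        qed
      qed
    qed
  next
    case kl: False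
    show ?thesis
    proof (cases "k \<noteq> i \<and> k \<noteq> j")
      case True
      then have "(\<Prod>m<p. ?f m) = 0" using zero[of k] k kl by (simp add: na_def)
      then show ?thesis using True kl by (simp add: EBform_def numeral_2_eq_2 KK02')
    next
      case k1: False
      show ?thesis
      proof (cases "l \<noteq> i \<and> l \<noteq> j")
        case True
        then have "(\<Prod>m<p. ?f m) = 0" using zero[of l] l kl by (simp add: na_def)
        then show ?thesis using True kl by (simp add: EBform_def numeral_2_eq_2 KK02')
      next
        case l1: False
        then have ij: "i \<noteq> j" using k1 kl by auto
        have "(\<Prod>m<p. ?f m) = prod ?f {i, j}"
          by (rule prod_sub) (use i j k1 l1 in \<open>auto simp: na_def KK00\<close>)
        then show ?thesis using ij k1 l1 kl by (auto simp: na_def EBform_def numeral_2_eq_2 KK02' mult.commute)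
      qed
    qed
  qed
qed

definition lam :: "real \<Rightarrow> real \<Rightarrow> real \<Rightarrow> real" where
  "lam x y z = (x + y - sqrt ((x - y)\<^sup>2 + 4 * z\<^sup>2)) / 2"

lemma lam_quad:
  "x * u\<^sup>2 + y * v\<^sup>2 + 2 * z * u * v \<ge> lam x y z * (u\<^sup>2 + v\<^sup>2)"
proof -
  define S where "S = sqrt ((x - y)\<^sup>2 + 4 * z\<^sup>2)"
  have S0: "S \<ge> \<bar>x - y\<bar>" unfolding S_def
    by (rule real_le_rsqrt) (simp add: power2_abs)
  have S2: "S\<^sup>2 = (x - y)\<^sup>2 + 4 * z\<^sup>2" unfolding S_def by (simp add: add_nonneg_nonneg)
  define P where "P = x - lam x y z"
  define Q where "Q = y - lam x y z"
  have P: "P = (x - y + S) / 2" unfolding P_def lam_def S_def by (simp add: field_simps)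
  have Q: "Q = (y - x + S) / 2" unfolding Q_def lam_def S_def by (simp add: field_simps)
  have "0 \<le> x - y + S" using S0 abs_ge_minus_self[of "x - y"] by linarith
  then have P0: "P \<ge> 0" unfolding P by simp
  have "0 \<le> y - x + S" using S0 abs_ge_self[of "x - y"] by linarith
  then have Q0: "Q \<ge> 0" unfolding Q by simp
  have PQ: "P * Q = z\<^sup>2"
  proof -
    have "P * Q = (S\<^sup>2 - (x - y)\<^sup>2) / 4" unfolding P Q by (simp add: field_simps power2_eq_square)
    then show ?thesis using S2 by simp
  qed
  have key: "P * u\<^sup>2 + Q * v\<^sup>2 + 2 * z * u * v \<ge> 0"
  proof (cases "P = 0")
    case True
    then have "z = 0" using PQ by simp
    then show ?thesis using Q0 True by simp
  next
    case False
    then have Pp: "P > 0" using P0 by simp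
    have "P * (P * u\<^sup>2 + Q * v\<^sup>2 + 2 * z * u * v) = (P * u + z * v)\<^sup>2 + (P * Q - z\<^sup>2) * v\<^sup>2"
      by (simp add: algebra_simps power2_eq_square)
    also have "\<dots> \<ge> 0" using PQ by simp
    finally show ?thesis using Pp by (simp add: zero_le_mult_iff)
  qed
  have "x * u\<^sup>2 + y * v\<^sup>2 + 2 * z * u * v - lam x y z * (u\<^sup>2 + v\<^sup>2) = P * u\<^sup>2 + Q * v\<^sup>2 + 2 * z * u * v"
    unfolding P_def Q_def by (simp add: algebra_simps)
  then show ?thesis using key by linarith
qed

lemma lam_diag: "lam x x (b * b) = x - b\<^sup>2"
proof -
  have "sqrt ((x - x)\<^sup>2 + 4 * (b * b)\<^sup>2) = 2 * b\<^sup>2"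
  proof -
    have e: "(x - x)\<^sup>2 + 4 * (b * b)\<^sup>2 = (2 * b\<^sup>2)\<^sup>2" by (simp add: power2_eq_square)
    have "sqrt ((2 * b\<^sup>2)\<^sup>2) = 2 * b\<^sup>2" using real_sqrt_abs[of "2 * b\<^sup>2"] by simp
    then show ?thesis by (simp only: e)
  qed
  then show ?thesis unfolding lam_def by simp
qed


definition EBf :: "(nat \<Rightarrow> nat \<Rightarrow> real) \<Rightarrow> (nat \<Rightarrow> real) \<Rightarrow> (nat \<Rightarrow> real) \<Rightarrow> (nat \<Rightarrow> real) \<Rightarrow> nat \<Rightarrow> nat \<Rightarrow> nat \<Rightarrow> nat \<Rightarrow> real" where
  "EBf gg Dd V b i j k l =
     (if k = l then gg i k * gg j k + (if i = j then (if k = i then Dd i else V i) else 0) else 0)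
     + (if i \<noteq> j \<and> k = j \<and> l = i then b i * b j else 0)
     + (if k = i \<and> l = j then b i * b j else 0)"

lemma stepA:
  assumes "i < p" "j < p" "k < p"
  shows "(\<Sum>l<p. c i k * c j l * EBf gg Dd V b i j k l)
    = c i k * c j k * (gg i k * gg j k + (if i = j then (if k = i then Dd i else V i) else 0))
      + (if i \<noteq> j \<and> k = j then c i k * c j i * (b i * b j) else 0)
      + (if k = i then c i k * c j j * (b i * b j) else 0)"
proof -
  have "(\<Sum>l<p. c i k * c j l * EBf gg Dd V b i j k l)
     = (\<Sum>l<p. (if l = k then c i k * c j l * (gg i k * gg j k + (if i = j then (if k = i then Dd i else V i) else 0)) else 0))
     + (\<Sum>l<p. (if l = i then (if i \<noteq> j \<and> k = j then c i k * c j l * (b i * b j) else 0) else 0))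
     + (\<Sum>l<p. (if l = j then (if k = i then c i k * c j l * (b i * b j) else 0) else 0))"
    unfolding EBf_def sum.distrib[symmetric] by (intro sum.cong) (auto simp: algebra_simps)
  also have "\<dots> = c i k * c j k * (gg i k * gg j k + (if i = j then (if k = i then Dd i else V i) else 0))
      + (if i \<noteq> j \<and> k = j then c i k * c j i * (b i * b j) else 0)
      + (if k = i then c i k * c j j * (b i * b j) else 0)"
    using assms by (simp only: sum.delta finite_lessThan lessThan_iff if_True)
  finally show ?thesis .
qed

lemma alg_eq:
  assumes hp: "h \<le> p"
  shows "(\<Sum>i<h. \<Sum>k<p. \<Sum>j<h. \<Sum>l<p. c i k * c j l * EBf gg Dd V b i j k l)
     - (\<Sum>i<h. \<Sum>k<p. c i k * (if k = i then b i else 0))\<^sup>2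
   = (\<Sum>k<p. (\<Sum>i<h. c i k * gg i k)\<^sup>2)
     + (\<Sum>i<h. \<Sum>k<p. (c i k)\<^sup>2 * (if k = i then Dd i else V i))
     + (\<Sum>i<h. \<Sum>j<h. (if i \<noteq> j then c i j * c j i * (b i * b j) else 0))"
proof -
  have A: "(\<Sum>i<h. \<Sum>k<p. \<Sum>j<h. \<Sum>l<p. c i k * c j l * EBf gg Dd V b i j k l)
     = (\<Sum>i<h. \<Sum>k<p. \<Sum>j<h. c i k * c j k * (gg i k * gg j k))
     + (\<Sum>i<h. \<Sum>k<p. \<Sum>j<h. c i k * c j k * (if i = j then (if k = i then Dd i else V i) else 0))
     + (\<Sum>i<h. \<Sum>k<p. \<Sum>j<h. (if i \<noteq> j \<and> k = j then c i k * c j i * (b i * b j) else 0))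
     + (\<Sum>i<h. \<Sum>k<p. \<Sum>j<h. (if k = i then c i k * c j j * (b i * b j) else 0))"
    unfolding sum.distrib[symmetric]
    by (intro sum.cong refl, subst stepA) (use hp in \<open>auto simp: algebra_simps\<close>)
  have T1: "(\<Sum>i<h. \<Sum>k<p. \<Sum>j<h. c i k * c j k * (gg i k * gg j k)) = (\<Sum>k<p. (\<Sum>i<h. c i k * gg i k)\<^sup>2)"
  proof -
    have "(\<Sum>i<h. \<Sum>k<p. \<Sum>j<h. c i k * c j k * (gg i k * gg j k)) = (\<Sum>k<p. \<Sum>i<h. \<Sum>j<h. c i k * c j k * (gg i k * gg j k))"
      by (rule sum.swap)
    also have "\<dots> = (\<Sum>k<p. (\<Sum>i<h. c i k * gg i k)\<^sup>2)"
      by (intro sum.cong refl) (simp add: power2_eq_square sum_product algebra_simps)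
    finally show ?thesis .
  qed
  have T2: "(\<Sum>i<h. \<Sum>k<p. \<Sum>j<h. c i k * c j k * (if i = j then (if k = i then Dd i else V i) else 0))
      = (\<Sum>i<h. \<Sum>k<p. (c i k)\<^sup>2 * (if k = i then Dd i else V i))"
  proof (intro sum.cong refl)
    fix i k assume "i \<in> {..<h}" "k \<in> {..<p}"
    have "(\<Sum>j<h. c i k * c j k * (if i = j then (if k = i then Dd i else V i) else 0))
       = (\<Sum>j<h. if j = i then c i k * c j k * (if k = i then Dd i else V i) else 0)"
      by (intro sum.cong) auto
    also have "\<dots> = c i k * c i k * (if k = i then Dd i else V i)" using \<open>i \<in> {..<h}\<close> by (simp add: sum.delta)
    finally show "(\<Sum>j<h. c i k * c j k * (if i = j then (if k = i then Dd i else V i) else 0))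
       = (c i k)\<^sup>2 * (if k = i then Dd i else V i)" by (simp add: power2_eq_square)
  qed
  have T3: "(\<Sum>i<h. \<Sum>k<p. \<Sum>j<h. (if i \<noteq> j \<and> k = j then c i k * c j i * (b i * b j) else 0))
      = (\<Sum>i<h. \<Sum>j<h. (if i \<noteq> j then c i j * c j i * (b i * b j) else 0))"
  proof (rule sum.cong[OF refl])
    fix i assume "i \<in> {..<h}"
    have "(\<Sum>k<p. \<Sum>j<h. (if i \<noteq> j \<and> k = j then c i k * c j i * (b i * b j) else 0))
       = (\<Sum>j<h. \<Sum>k<p. (if k = j then (if i \<noteq> j then c i k * c j i * (b i * b j) else 0) else 0))"
      by (subst sum.swap) (intro sum.cong refl, auto)
    also have "\<dots> = (\<Sum>j<h. (if i \<noteq> j then c i j * c j i * (b i * b j) else 0))"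
      using hp by (intro sum.cong refl) (simp add: sum.delta)
    finally show "(\<Sum>k<p. \<Sum>j<h. (if i \<noteq> j \<and> k = j then c i k * c j i * (b i * b j) else 0))
       = (\<Sum>j<h. (if i \<noteq> j then c i j * c j i * (b i * b j) else 0))" .
  qed
  have T4: "(\<Sum>i<h. \<Sum>k<p. \<Sum>j<h. (if k = i then c i k * c j j * (b i * b j) else 0))
      = (\<Sum>i<h. \<Sum>k<p. c i k * (if k = i then b i else 0))\<^sup>2"
  proof -
    have "(\<Sum>i<h. \<Sum>k<p. \<Sum>j<h. (if k = i then c i k * c j j * (b i * b j) else 0))
       = (\<Sum>i<h. \<Sum>j<h. c i i * c j j * (b i * b j))"
    proof (rule sum.cong[OF refl])
      fix i assume "i \<in> {..<h}"
      then have ip: "i < p" using hp by simp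
      have "(\<Sum>k<p. \<Sum>j<h. (if k = i then c i k * c j j * (b i * b j) else 0))
         = (\<Sum>k<p. if k = i then (\<Sum>j<h. c i k * c j j * (b i * b j)) else 0)"
        by (intro sum.cong refl) auto
      also have "\<dots> = (\<Sum>j<h. c i i * c j j * (b i * b j))" using ip by (simp add: sum.delta)
      finally show "(\<Sum>k<p. \<Sum>j<h. (if k = i then c i k * c j j * (b i * b j) else 0)) = (\<Sum>j<h. c i i * c j j * (b i * b j))" .
    qed
    also have "\<dots> = (\<Sum>i<h. c i i * b i)\<^sup>2"
      by (simp add: power2_eq_square sum_product algebra_simps)
    also have "(\<Sum>i<h. c i i * b i) = (\<Sum>i<h. \<Sum>k<p. c i k * (if k = i then b i else 0))"
    proof (intro sum.cong refl)
      fix i assume "i \<in> {..<h}"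
      then have ip: "i < p" using hp by simp
      have "(\<Sum>k<p. c i k * (if k = i then b i else 0)) = (\<Sum>k<p. if k = i then c i k * b i else 0)"
        by (intro sum.cong refl) auto
      then show "c i i * b i = (\<Sum>k<p. c i k * (if k = i then b i else 0))" using ip by (simp add: sum.delta)
    qed
    finally show ?thesis .
  qed
  show ?thesis unfolding A T1 T2 T3 T4 by simp
qed


lemma sum_split_h:
  fixes f :: "nat \<Rightarrow> real"
  assumes "h \<le> p"
  shows "(\<Sum>k<p. f k) = (\<Sum>k<h. f k) + (\<Sum>k\<in>{h..<p}. f k)"
proof -
  have "{..<p} = {..<h} \<union> {h..<p}" using assms by auto
  then show ?thesis by (simp add: sum.union_disjoint[of "{..<h}" "{h..<p}"] ivl_disj_int)
qed

lemma alg_ge: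
  fixes h p :: nat
  assumes hp: "h \<le> p"
    and H2: "\<forall>i<h. \<theta>2 \<le> Dd i"
    and H1: "\<forall>i<h. \<forall>j<h. \<theta>1 \<le> lam (V i) (V j) (b i * b j)"
  shows "(\<Sum>k<p. (\<Sum>i<h. c i k * gg i k)\<^sup>2)
     + (\<Sum>i<h. \<Sum>k<p. (c i k)\<^sup>2 * (if k = i then Dd i else V i))
     + (\<Sum>i<h. \<Sum>j<h. (if i \<noteq> j then c i j * c j i * (b i * b j) else 0))
     \<ge> min \<theta>1 \<theta>2 * (\<Sum>i<h. \<Sum>k<p. (c i k)\<^sup>2)"
proof -
  define z where "z = min \<theta>1 \<theta>2"
  have Vi: "z \<le> V i" if "i < h" for i
  proof -
    have "\<theta>1 \<le> lam (V i) (V i) (b i * b i)" using H1 that by auto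
    also have "\<dots> = V i - (b i)\<^sup>2" by (rule lam_diag)
    also have "\<dots> \<le> V i" by simp
    finally show ?thesis unfolding z_def by linarith
  qed
  define T where "T i j = (c i j)\<^sup>2 * (if j = i then Dd i else V i) + (if i \<noteq> j then c i j * c j i * (b i * b j) else 0)" for i j
  have Tpair: "T i j + T j i \<ge> z * ((c i j)\<^sup>2 + (c j i)\<^sup>2)" if "i < h" "j < h" for i j
  proof (cases "i = j")
    case True
    have "z * (c i i)\<^sup>2 \<le> Dd i * (c i i)\<^sup>2"
      using H2 that(1) unfolding z_def by (intro mult_right_mono) auto
    then show ?thesis using True unfolding T_def by (simp add: algebra_simps)
  next
    case False
    have "T i j + T j i = V i * (c i j)\<^sup>2 + V j * (c j i)\<^sup>2 + 2 * (b i * b j) * c i j * c j i"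
      unfolding T_def using False by (simp add: algebra_simps)
    also have "\<dots> \<ge> lam (V i) (V j) (b i * b j) * ((c i j)\<^sup>2 + (c j i)\<^sup>2)" by (rule lam_quad)
    finally have a: "T i j + T j i \<ge> lam (V i) (V j) (b i * b j) * ((c i j)\<^sup>2 + (c j i)\<^sup>2)" .
    have "z * ((c i j)\<^sup>2 + (c j i)\<^sup>2) \<le> lam (V i) (V j) (b i * b j) * ((c i j)\<^sup>2 + (c j i)\<^sup>2)"
    proof (rule mult_right_mono)
      have "\<theta>1 \<le> lam (V i) (V j) (b i * b j)" using H1 that by auto
      then show "z \<le> lam (V i) (V j) (b i * b j)" unfolding z_def by linarith
    qed simp
    then show ?thesis using a by linarith
  qed
  have X: "(\<Sum>i<h. \<Sum>j<h. T i j) \<ge> z * (\<Sum>i<h. \<Sum>j<h. (c i j)\<^sup>2)"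
  proof -
    have "2 * (\<Sum>i<h. \<Sum>j<h. T i j) = (\<Sum>i<h. \<Sum>j<h. T i j) + (\<Sum>i<h. \<Sum>j<h. T j i)"
      by (subst (2) sum.swap) simp
    also have "\<dots> = (\<Sum>i<h. \<Sum>j<h. T i j + T j i)" by (simp add: sum.distrib)
    also have "\<dots> \<ge> (\<Sum>i<h. \<Sum>j<h. z * ((c i j)\<^sup>2 + (c j i)\<^sup>2))"
      by (intro sum_mono Tpair) auto
    also have "(\<Sum>i<h. \<Sum>j<h. z * ((c i j)\<^sup>2 + (c j i)\<^sup>2)) = z * ((\<Sum>i<h. \<Sum>j<h. (c i j)\<^sup>2) + (\<Sum>i<h. \<Sum>j<h. (c j i)\<^sup>2))"
      by (simp add: sum.distrib sum_distrib_left distrib_left)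
    also have "(\<Sum>i<h. \<Sum>j<h. (c j i)\<^sup>2) = (\<Sum>i<h. \<Sum>j<h. (c i j)\<^sup>2)" by (rule sum.swap)
    finally show ?thesis by simp
  qed
  have Y: "(\<Sum>i<h. \<Sum>k\<in>{h..<p}. (c i k)\<^sup>2 * (if k = i then Dd i else V i)) \<ge> z * (\<Sum>i<h. \<Sum>k\<in>{h..<p}. (c i k)\<^sup>2)"
  proof -
    have "z * (\<Sum>i<h. \<Sum>k\<in>{h..<p}. (c i k)\<^sup>2) = (\<Sum>i<h. \<Sum>k\<in>{h..<p}. z * (c i k)\<^sup>2)"
      by (simp add: sum_distrib_left)
    also have "\<dots> \<le> (\<Sum>i<h. \<Sum>k\<in>{h..<p}. (c i k)\<^sup>2 * (if k = i then Dd i else V i))"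
    proof (intro sum_mono)
      fix i k assume i: "i \<in> {..<h}" and k: "k \<in> {h..<p}"
      then have "k \<noteq> i" by auto
      then show "z * (c i k)\<^sup>2 \<le> (c i k)\<^sup>2 * (if k = i then Dd i else V i)"
        using Vi[of i] i by (simp add: mult.commute mult_right_mono)
    qed
    finally show ?thesis .
  qed
  have Z: "(\<Sum>k<p. (\<Sum>i<h. c i k * gg i k)\<^sup>2) \<ge> 0" by (intro sum_nonneg) auto
  have split: "(\<Sum>i<h. \<Sum>k<p. (c i k)\<^sup>2 * (if k = i then Dd i else V i))
      = (\<Sum>i<h. \<Sum>k<h. (c i k)\<^sup>2 * (if k = i then Dd i else V i)) + (\<Sum>i<h. \<Sum>k\<in>{h..<p}. (c i k)\<^sup>2 * (if k = i then Dd i else V i))"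
    by (simp add: sum_split_h[OF hp] sum.distrib)
  have split2: "(\<Sum>i<h. \<Sum>k<p. (c i k)\<^sup>2) = (\<Sum>i<h. \<Sum>k<h. (c i k)\<^sup>2) + (\<Sum>i<h. \<Sum>k\<in>{h..<p}. (c i k)\<^sup>2)"
    by (simp add: sum_split_h[OF hp] sum.distrib)
  have TT: "(\<Sum>i<h. \<Sum>j<h. T i j) = (\<Sum>i<h. \<Sum>k<h. (c i k)\<^sup>2 * (if k = i then Dd i else V i)) + (\<Sum>i<h. \<Sum>j<h. (if i \<noteq> j then c i j * c j i * (b i * b j) else 0))"
    unfolding T_def by (simp add: sum.distrib)
  show ?thesis
    unfolding z_def[symmetric] split split2 using X Y Z TT by (simp add: distrib_left)
qed

lemma sum_reindex_hp:
  fixes f :: "nat \<Rightarrow> real"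
  shows "(\<Sum>a<h * p. f a) = (\<Sum>i<h. \<Sum>j<p. f (i * p + j))"
proof (induction h)
  case 0 then show ?case by simp
next
  case (Suc h)
  have "{..<Suc h * p} = {..<h * p} \<union> {h * p..<h * p + p}" by auto
  then have "(\<Sum>a<Suc h * p. f a) = (\<Sum>a<h * p. f a) + (\<Sum>a\<in>{h * p..<h * p + p}. f a)"
    by (simp add: sum.union_disjoint ivl_disj_int)
  also have "(\<Sum>a\<in>{h * p..<h * p + p}. f a) = (\<Sum>j<p. f (h * p + j))"
  proof -
    have "(\<Sum>a\<in>{h * p..<h * p + p}. f a) = (\<Sum>j\<in>{0..<p}. f (j + h * p))"
      using sum.shift_bounds_nat_ivl[of f 0 "h * p" p] by (simp add: add.commute)
    then show ?thesis by (simp add: atLeast0LessThan add.commute)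
  qed
  finally show ?case using Suc by simp
qed

lemma var_lin:
  fixes M :: "'a measure" and Z :: "nat \<Rightarrow> 'a \<Rightarrow> real"
  assumes iZ: "\<And>a. a < N \<Longrightarrow> integrable M (Z a)"
    and iZZ: "\<And>a b. a < N \<Longrightarrow> b < N \<Longrightarrow> integrable M (\<lambda>x. Z a x * Z b x)"
  shows "(\<Sum>a<N. \<Sum>b<N. v a * v b * (integral\<^sup>L M (\<lambda>x. Z a x * Z b x) - integral\<^sup>L M (Z a) * integral\<^sup>L M (Z b)))
    = integral\<^sup>L M (\<lambda>x. (\<Sum>a<N. v a * Z a x)\<^sup>2) - (integral\<^sup>L M (\<lambda>x. \<Sum>a<N. v a * Z a x))\<^sup>2"
proof -
  have sq: "(\<lambda>x. (\<Sum>a<N. v a * Z a x)\<^sup>2) = (\<lambda>x. \<Sum>a<N. \<Sum>b<N. v a * v b * (Z a x * Z b x))"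
    by (simp add: power2_eq_square sum_product algebra_simps)
  have I1: "integral\<^sup>L M (\<lambda>x. (\<Sum>a<N. v a * Z a x)\<^sup>2) = (\<Sum>a<N. \<Sum>b<N. v a * v b * integral\<^sup>L M (\<lambda>x. Z a x * Z b x))"
  proof -
    have "integral\<^sup>L M (\<lambda>x. \<Sum>a<N. \<Sum>b<N. v a * v b * (Z a x * Z b x))
        = (\<Sum>a<N. integral\<^sup>L M (\<lambda>x. \<Sum>b<N. v a * v b * (Z a x * Z b x)))"
      by (rule Bochner_Integration.integral_sum[where I="{..<N}" and f="\<lambda>a x. \<Sum>b<N. v a * v b * (Z a x * Z b x)"])
         (use iZZ in \<open>auto intro!: Bochner_Integration.integrable_sum\<close>)
    also have "\<dots> = (\<Sum>a<N. \<Sum>b<N. v a * v b * integral\<^sup>L M (\<lambda>x. Z a x * Z b x))"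
    proof (rule sum.cong[OF refl])
      fix a assume a: "a \<in> {..<N}"
      show "integral\<^sup>L M (\<lambda>x. \<Sum>b<N. v a * v b * (Z a x * Z b x)) = (\<Sum>b<N. v a * v b * integral\<^sup>L M (\<lambda>x. Z a x * Z b x))"
        by (subst Bochner_Integration.integral_sum) (use iZZ a in auto)
    qed
    finally show ?thesis unfolding sq .
  qed
  have I2: "integral\<^sup>L M (\<lambda>x. \<Sum>a<N. v a * Z a x) = (\<Sum>a<N. v a * integral\<^sup>L M (Z a))"
    using iZ by (subst Bochner_Integration.integral_sum) auto
  show ?thesis unfolding I1 I2
    by (simp add: power2_eq_square sum_product algebra_simps sum_subtractf)
qed

lemma good_transfer:
  fixes f :: "(nat \<Rightarrow> real) \<Rightarrow> real"
  assumes g: "good p T" and f: "integrable (gauss_vec p) f"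
  shows "integrable (gauss_vec p) (\<lambda>x. f (T x))" and "integral\<^sup>L (gauss_vec p) (\<lambda>x. f (T x)) = integral\<^sup>L (gauss_vec p) f"
proof -
  have m: "T \<in> gauss_vec p \<rightarrow>\<^sub>M gauss_vec p" and d: "distr (gauss_vec p) (gauss_vec p) T = gauss_vec p"
    using g unfolding good_def by auto
  have fm: "f \<in> borel_measurable (gauss_vec p)" using f by simp
  show "integrable (gauss_vec p) (\<lambda>x. f (T x))"
    using integrable_distr_eq[OF m fm] f d by simp
  show "integral\<^sup>L (gauss_vec p) (\<lambda>x. f (T x)) = integral\<^sup>L (gauss_vec p) f"
    using integral_distr[OF m fm] d by simp
qed

lemma finite_measure_std_normal: "finite_measure std_normal"
  using prob_space_std_normal by (simp add: prob_space_def)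

lemma integrable_const_sn[simp]: "integrable std_normal (\<lambda>_. c::real)"
  by (rule finite_measure.integrable_const[OF finite_measure_std_normal])

lemma Eg_const: "Eg (\<lambda>_. c) = c"
  unfolding Eg_def using prob_space.prob_space[OF prob_space_std_normal] by simp

lemma hb_Eg: "integrable std_normal f \<Longrightarrow> has_bochner_integral std_normal f (Eg f)"
  unfolding Eg_def by (rule has_bochner_integral_integrable)

lemma hb_const: "has_bochner_integral std_normal (\<lambda>_. c) (c::real)"
  using hb_Eg[OF integrable_const_sn[of c]] Eg_const[of c] by simp

lemma stat_nonneg:
  fixes \<eta> :: "real \<Rightarrow> real"
  assumes m: "\<eta> \<in> borel_measurable borel"
    and i0: "integrable std_normal (\<lambda>t. (\<eta> t)\<^sup>2)"
    and i2: "integrable std_normal (\<lambda>t. (t ^ 2 * \<eta> t)\<^sup>2)"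
  shows "Varg (\<lambda>g. g * \<eta> g) - (Eg (\<lambda>g. g\<^sup>2 * \<eta> g))\<^sup>2 \<ge> 0"
    and "Varg \<eta> \<ge> (Eg (\<lambda>g. g * \<eta> g))\<^sup>2"
proof -
  have I: "integrable std_normal (\<lambda>t. \<eta> t ^ a * t ^ b)" if "a \<le> 2" "b \<le> 2" for a b
    by (rule integrable_eta_pow[OF m i0 i2 that])
  have i_e: "integrable std_normal \<eta>" using I[of 1 0] by simp
  have i_ge: "integrable std_normal (\<lambda>g. g * \<eta> g)" using I[of 1 1] by (simp add: mult.commute)
  have i_gge: "integrable std_normal (\<lambda>g. g\<^sup>2 * \<eta> g)" using I[of 1 2] by (simp add: mult.commute)
  have i_ee: "integrable std_normal (\<lambda>g. (\<eta> g)\<^sup>2)" using i0 .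
  have i_gg_ee: "integrable std_normal (\<lambda>g. (g * \<eta> g)\<^sup>2)" using I[of 2 2] by (simp add: power_mult_distrib mult.commute)
  have i_g: "integrable std_normal (\<lambda>g. g)" using integrable_std_normal_pow[of 1] by simp
  have i_g2: "integrable std_normal (\<lambda>g. g\<^sup>2)" using integrable_std_normal_pow[of 2] by simp
  have Eg1: "Eg (\<lambda>g. g) = 0" by (rule Eg_id)
  have Eg2: "Eg (\<lambda>g. g\<^sup>2) = 1" using Eg_sq by simp
  note hbI = has_bochner_integral_add has_bochner_integral_mult_right hb_const has_bochner_integral_integrable
  {
    define e where "e = Eg \<eta>"
    define b where "b = Eg (\<lambda>g. g * \<eta> g)"
    have eq: "(\<lambda>g. (\<eta> g - e - b * g)\<^sup>2) = (\<lambda>g. ((\<eta> g)\<^sup>2 + (- 2 * e) * \<eta> g) + ((- 2 * b) * (g * \<eta> g) + e\<^sup>2) + ((2 * e * b) * g + b\<^sup>2 * g\<^sup>2))"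
      by (simp add: fun_eq_iff power2_eq_square algebra_simps)
    have "0 \<le> Eg (\<lambda>g. (\<eta> g - e - b * g)\<^sup>2)" unfolding Eg_def by (rule integral_nonneg_AE) auto
    also have "Eg (\<lambda>g. (\<eta> g - e - b * g)\<^sup>2) = (Eg (\<lambda>g. (\<eta> g)\<^sup>2) + (- 2 * e) * Eg \<eta>) + ((- 2 * b) * Eg (\<lambda>g. g * \<eta> g) + e\<^sup>2) + ((2 * e * b) * Eg (\<lambda>g. g) + b\<^sup>2 * Eg (\<lambda>g. g\<^sup>2))"
      unfolding eq Eg_def
      by (rule has_bochner_integral_integral_eq)
         (intro hbI i_e i_ge i_ee i_g i_g2)
    finally have "0 \<le> Eg (\<lambda>g. (\<eta> g)\<^sup>2) - e\<^sup>2 - b\<^sup>2"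
      unfolding Eg1 Eg2 e_def[symmetric] b_def[symmetric] by (simp add: power2_eq_square)
    then show "Varg \<eta> \<ge> (Eg (\<lambda>g. g * \<eta> g))\<^sup>2" unfolding Varg_def e_def b_def by simp
  }
  {
    define b where "b = Eg (\<lambda>g. g * \<eta> g)"
    define mm where "mm = Eg (\<lambda>g. g\<^sup>2 * \<eta> g)"
    have eq: "(\<lambda>g. (g * \<eta> g - b - mm * g)\<^sup>2) = (\<lambda>g. ((g * \<eta> g)\<^sup>2 + (- 2 * b) * (g * \<eta> g)) + ((- 2 * mm) * (g\<^sup>2 * \<eta> g) + b\<^sup>2) + ((2 * b * mm) * g + mm\<^sup>2 * g\<^sup>2))"
      by (simp add: fun_eq_iff power2_eq_square algebra_simps)
    have "0 \<le> Eg (\<lambda>g. (g * \<eta> g - b - mm * g)\<^sup>2)" unfolding Eg_def by (rule integral_nonneg_AE) auto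
    also have "Eg (\<lambda>g. (g * \<eta> g - b - mm * g)\<^sup>2) = (Eg (\<lambda>g. (g * \<eta> g)\<^sup>2) + (- 2 * b) * Eg (\<lambda>g. g * \<eta> g)) + ((- 2 * mm) * Eg (\<lambda>g. g\<^sup>2 * \<eta> g) + b\<^sup>2) + ((2 * b * mm) * Eg (\<lambda>g. g) + mm\<^sup>2 * Eg (\<lambda>g. g\<^sup>2))"
      unfolding eq Eg_def
      by (rule has_bochner_integral_integral_eq)
         (intro hbI i_gg_ee i_ge i_gge i_g i_g2)
    finally have "0 \<le> Eg (\<lambda>g. (g * \<eta> g)\<^sup>2) - b\<^sup>2 - mm\<^sup>2"
      unfolding Eg1 Eg2 b_def[symmetric] mm_def[symmetric] by (simp add: power2_eq_square)
    then show "Varg (\<lambda>g. g * \<eta> g) - (Eg (\<lambda>g. g\<^sup>2 * \<eta> g))\<^sup>2 \<ge> 0" unfolding Varg_def b_def mm_def by simp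
  }
qed

lemma theta_bounds:
  fixes \<sigma> :: "real \<Rightarrow> real"
  assumes diff: "\<forall>t. \<sigma> differentiable (at t)"
    and moments: "\<forall>x\<in>{\<alpha>..\<beta>}. \<forall>k::nat\<le>2. integrable std_normal (\<lambda>g. (g ^ k * eta \<sigma> x g)\<^sup>2)"
    and x: "x \<in> {\<alpha>..\<beta>}" and y: "y \<in> {\<alpha>..\<beta>}"
  shows "theta2 \<sigma> \<alpha> \<beta> \<le> Varg (\<lambda>g. g * eta \<sigma> x g) - (Eg (\<lambda>g. g\<^sup>2 * eta \<sigma> x g))\<^sup>2"
    and "theta1 \<sigma> \<alpha> \<beta> \<le> lam (Varg (eta \<sigma> x)) (Varg (eta \<sigma> y)) (Eg (\<lambda>g. g * eta \<sigma> x g) * Eg (\<lambda>g. g * eta \<sigma> y g))"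
proof -
  have dm: "deriv \<sigma> \<in> borel_measurable borel" by (rule deriv_measurable[OF diff])
  have st: "Varg (\<lambda>g. g * eta \<sigma> z g) - (Eg (\<lambda>g. g\<^sup>2 * eta \<sigma> z g))\<^sup>2 \<ge> 0"
       "Varg (eta \<sigma> z) \<ge> (Eg (\<lambda>g. g * eta \<sigma> z g))\<^sup>2" if z: "z \<in> {\<alpha>..\<beta>}" for z
  proof -
    have m: "eta \<sigma> z \<in> borel_measurable borel" unfolding eta_def[abs_def] using dm by measurable
    have i0: "integrable std_normal (\<lambda>t. (eta \<sigma> z t)\<^sup>2)" using moments z by (auto dest!: bspec[of _ _ z] spec[of _ 0])
    have i2: "integrable std_normal (\<lambda>t. (t ^ 2 * eta \<sigma> z t)\<^sup>2)" using moments z by auto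
    show "Varg (\<lambda>g. g * eta \<sigma> z g) - (Eg (\<lambda>g. g\<^sup>2 * eta \<sigma> z g))\<^sup>2 \<ge> 0"
         "Varg (eta \<sigma> z) \<ge> (Eg (\<lambda>g. g * eta \<sigma> z g))\<^sup>2"
      using stat_nonneg[OF m i0 i2] by auto
  qed
  show "theta2 \<sigma> \<alpha> \<beta> \<le> Varg (\<lambda>g. g * eta \<sigma> x g) - (Eg (\<lambda>g. g\<^sup>2 * eta \<sigma> x g))\<^sup>2"
    unfolding theta2_def
  proof (rule cInf_lower)
    show "Varg (\<lambda>g. g * eta \<sigma> x g) - (Eg (\<lambda>g. g\<^sup>2 * eta \<sigma> x g))\<^sup>2
      \<in> (\<lambda>x. Varg (\<lambda>g. g * eta \<sigma> x g) - (Eg (\<lambda>g. g\<^sup>2 * eta \<sigma> x g))\<^sup>2) ` {\<alpha>..\<beta>}" using x by blast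
    show "bdd_below ((\<lambda>x. Varg (\<lambda>g. g * eta \<sigma> x g) - (Eg (\<lambda>g. g\<^sup>2 * eta \<sigma> x g))\<^sup>2) ` {\<alpha>..\<beta>})"
      by (rule bdd_belowI[of _ 0]) (use st(1) in auto)
  qed
  have lam_nn: "0 \<le> lam (Varg (eta \<sigma> x)) (Varg (eta \<sigma> y)) (Eg (\<lambda>g. g * eta \<sigma> x g) * Eg (\<lambda>g. g * eta \<sigma> y g))"
    if x: "x \<in> {\<alpha>..\<beta>}" and y: "y \<in> {\<alpha>..\<beta>}" for x y
  proof -
    define a where "a = Varg (eta \<sigma> x)"
    define c where "c = Varg (eta \<sigma> y)"
    define z where "z = Eg (\<lambda>g. g * eta \<sigma> x g) * Eg (\<lambda>g. g * eta \<sigma> y g)"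
    have a: "a \<ge> (Eg (\<lambda>g. g * eta \<sigma> x g))\<^sup>2" using st(2)[OF x] unfolding a_def .
    have c: "c \<ge> (Eg (\<lambda>g. g * eta \<sigma> y g))\<^sup>2" using st(2)[OF y] unfolding c_def .
    have a0: "a \<ge> 0" using a by (smt (verit) zero_le_power2)
    have c0: "c \<ge> 0" using c by (smt (verit) zero_le_power2)
    have z2: "z\<^sup>2 \<le> a * c" unfolding z_def power_mult_distrib using a c a0 c0
      by (intro mult_mono) auto
    have "(a - c)\<^sup>2 + 4 * z\<^sup>2 \<le> (a + c)\<^sup>2" using z2 by (simp add: power2_eq_square algebra_simps)
    then have "sqrt ((a - c)\<^sup>2 + 4 * z\<^sup>2) \<le> sqrt ((a + c)\<^sup>2)" by (rule real_sqrt_le_mono)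
    also have "sqrt ((a + c)\<^sup>2) = a + c" using a0 c0 by simp
    finally have "sqrt ((a - c)\<^sup>2 + 4 * z\<^sup>2) \<le> a + c" .
    then show ?thesis unfolding lam_def a_def[symmetric] c_def[symmetric] z_def[symmetric] by simp
  qed
  have t1eq: "(\<lambda>(x, y). (Varg (eta \<sigma> x) + Varg (eta \<sigma> y)
       - sqrt ((Varg (eta \<sigma> x) - Varg (eta \<sigma> y))\<^sup>2
               + 4 * (Eg (\<lambda>g. g * eta \<sigma> x g))\<^sup>2 * (Eg (\<lambda>g. g * eta \<sigma> y g))\<^sup>2)) / 2)
      = (\<lambda>(x, y). lam (Varg (eta \<sigma> x)) (Varg (eta \<sigma> y)) (Eg (\<lambda>g. g * eta \<sigma> x g) * Eg (\<lambda>g. g * eta \<sigma> y g)))"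
    by (auto simp: fun_eq_iff lam_def power_mult_distrib mult.assoc)
  show "theta1 \<sigma> \<alpha> \<beta> \<le> lam (Varg (eta \<sigma> x)) (Varg (eta \<sigma> y)) (Eg (\<lambda>g. g * eta \<sigma> x g) * Eg (\<lambda>g. g * eta \<sigma> y g))"
    unfolding theta1_def t1eq
  proof (rule cInf_lower)
    show "lam (Varg (eta \<sigma> x)) (Varg (eta \<sigma> y)) (Eg (\<lambda>g. g * eta \<sigma> x g) * Eg (\<lambda>g. g * eta \<sigma> y g))
      \<in> (\<lambda>(x, y). lam (Varg (eta \<sigma> x)) (Varg (eta \<sigma> y)) (Eg (\<lambda>g. g * eta \<sigma> x g) * Eg (\<lambda>g. g * eta \<sigma> y g))) ` ({\<alpha>..\<beta>} \<times> {\<alpha>..\<beta>})"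
      using x y by force
    show "bdd_below ((\<lambda>(x, y). lam (Varg (eta \<sigma> x)) (Varg (eta \<sigma> y)) (Eg (\<lambda>g. g * eta \<sigma> x g) * Eg (\<lambda>g. g * eta \<sigma> y g))) ` ({\<alpha>..\<beta>} \<times> {\<alpha>..\<beta>}))"
      by (rule bdd_belowI[of _ 0]) (use lam_nn in auto)
  qed
qed

lemma integral_sum2:
  fixes f :: "nat \<Rightarrow> nat \<Rightarrow> 'a \<Rightarrow> real"
  assumes "\<And>i k. i \<in> A \<Longrightarrow> k \<in> B \<Longrightarrow> integrable M (f i k)"
  shows "integrable M (\<lambda>x. \<Sum>i\<in>A. \<Sum>k\<in>B. a i k * f i k x)"
    and "integral\<^sup>L M (\<lambda>x. \<Sum>i\<in>A. \<Sum>k\<in>B. a i k * f i k x) = (\<Sum>i\<in>A. \<Sum>k\<in>B. a i k * integral\<^sup>L M (f i k))"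
proof -
  have I1: "integrable M (\<lambda>x. \<Sum>k\<in>B. a i k * f i k x)" if "i \<in> A" for i
    using assms that by (intro Bochner_Integration.integrable_sum integrable_mult_right) auto
  show "integrable M (\<lambda>x. \<Sum>i\<in>A. \<Sum>k\<in>B. a i k * f i k x)"
    by (rule Bochner_Integration.integrable_sum) (rule I1)
  have "integral\<^sup>L M (\<lambda>x. \<Sum>i\<in>A. \<Sum>k\<in>B. a i k * f i k x) = (\<Sum>i\<in>A. integral\<^sup>L M (\<lambda>x. \<Sum>k\<in>B. a i k * f i k x))"
    by (rule Bochner_Integration.integral_sum[where I=A and f="\<lambda>i x. \<Sum>k\<in>B. a i k * f i k x"]) (use I1 in auto)
  also have "\<dots> = (\<Sum>i\<in>A. \<Sum>k\<in>B. a i k * integral\<^sup>L M (f i k))"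
  proof (rule sum.cong[OF refl])
    fix i assume i: "i \<in> A"
    show "integral\<^sup>L M (\<lambda>x. \<Sum>k\<in>B. a i k * f i k x) = (\<Sum>k\<in>B. a i k * integral\<^sup>L M (f i k))"
      by (subst Bochner_Integration.integral_sum) (use assms i in \<open>auto simp: integral_mult_right_zero\<close>)
  qed
  finally show "integral\<^sup>L M (\<lambda>x. \<Sum>i\<in>A. \<Sum>k\<in>B. a i k * f i k x) = (\<Sum>i\<in>A. \<Sum>k\<in>B. a i k * integral\<^sup>L M (f i k))" .
qed

lemma integral_sum4:
  fixes f :: "nat \<Rightarrow> nat \<Rightarrow> nat \<Rightarrow> nat \<Rightarrow> 'a \<Rightarrow> real"
  assumes "\<And>i k j l. i \<in> A \<Longrightarrow> k \<in> B \<Longrightarrow> j \<in> C \<Longrightarrow> l \<in> D \<Longrightarrow> integrable M (f i k j l)"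
  shows "integrable M (\<lambda>x. \<Sum>i\<in>A. \<Sum>k\<in>B. \<Sum>j\<in>C. \<Sum>l\<in>D. a i k j l * f i k j l x)"
    and "integral\<^sup>L M (\<lambda>x. \<Sum>i\<in>A. \<Sum>k\<in>B. \<Sum>j\<in>C. \<Sum>l\<in>D. a i k j l * f i k j l x)
       = (\<Sum>i\<in>A. \<Sum>k\<in>B. \<Sum>j\<in>C. \<Sum>l\<in>D. a i k j l * integral\<^sup>L M (f i k j l))"
proof -
  have I2: "integrable M (\<lambda>x. \<Sum>j\<in>C. \<Sum>l\<in>D. a i k j l * f i k j l x)"
    and E2: "integral\<^sup>L M (\<lambda>x. \<Sum>j\<in>C. \<Sum>l\<in>D. a i k j l * f i k j l x) = (\<Sum>j\<in>C. \<Sum>l\<in>D. a i k j l * integral\<^sup>L M (f i k j l))"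
    if "i \<in> A" "k \<in> B" for i k
  proof -
    show "integrable M (\<lambda>x. \<Sum>j\<in>C. \<Sum>l\<in>D. a i k j l * f i k j l x)"
      by (rule integral_sum2(1)) (use assms that in auto)
    show "integral\<^sup>L M (\<lambda>x. \<Sum>j\<in>C. \<Sum>l\<in>D. a i k j l * f i k j l x) = (\<Sum>j\<in>C. \<Sum>l\<in>D. a i k j l * integral\<^sup>L M (f i k j l))"
      by (rule integral_sum2(2)) (use assms that in auto)
  qed
  have e: "(\<lambda>x. \<Sum>i\<in>A. \<Sum>k\<in>B. \<Sum>j\<in>C. \<Sum>l\<in>D. a i k j l * f i k j l x)
     = (\<lambda>x. \<Sum>i\<in>A. \<Sum>k\<in>B. 1 * (\<lambda>i k x. \<Sum>j\<in>C. \<Sum>l\<in>D. a i k j l * f i k j l x) i k x)" by simp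
  show "integrable M (\<lambda>x. \<Sum>i\<in>A. \<Sum>k\<in>B. \<Sum>j\<in>C. \<Sum>l\<in>D. a i k j l * f i k j l x)"
    unfolding e by (rule integral_sum2(1)) (use I2 in auto)
  show "integral\<^sup>L M (\<lambda>x. \<Sum>i\<in>A. \<Sum>k\<in>B. \<Sum>j\<in>C. \<Sum>l\<in>D. a i k j l * f i k j l x)
       = (\<Sum>i\<in>A. \<Sum>k\<in>B. \<Sum>j\<in>C. \<Sum>l\<in>D. a i k j l * integral\<^sup>L M (f i k j l))"
    unfolding e by (subst integral_sum2(2)) (use I2 E2 in auto)
qed

theorem mainTheorem17:
  fixes h p :: nat and W :: "nat \<Rightarrow> nat \<Rightarrow> real" and \<alpha> \<beta> :: real
    and \<sigma> :: "real \<Rightarrow> real"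
  assumes "h \<le> p"
    and orth: "\<forall>i<h. \<forall>j<h. i \<noteq> j \<longrightarrow> (\<Sum>k<p. W i k * W j k) = 0"
    and nonzero: "\<forall>i<h. \<exists>k<p. W i k \<noteq> 0"
    and "0 < \<alpha>" and "\<alpha> \<le> \<beta>"
    and sv: "singular_values h p W \<subseteq> {\<alpha>..\<beta>}"
    and diff: "\<forall>t. \<sigma> differentiable (at t)"
    and moments: "\<forall>x\<in>{\<alpha>..\<beta>}. \<forall>k::nat\<le>2.
                    integrable std_normal (\<lambda>g. (g ^ k * eta \<sigma> x g)\<^sup>2)"
  shows "loewner_ge_scalar (h * p) (cov_matrix (gauss_vec p) (kron_feature p \<sigma> W))
           (zeta \<sigma> \<alpha> \<beta>)"
proof -
  have hp: "h \<le> p" using assms(1) .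
  define s where "s i = sqrt (\<Sum>k<p. (W i k)\<^sup>2)" for i
  have s_sq: "(s i)\<^sup>2 = (\<Sum>k<p. (W i k)\<^sup>2)" for i unfolding s_def by (simp add: sum_nonneg)
  have s_pos: "s i > 0" if i: "i < h" for i
  proof -
    obtain k where k: "k < p" "W i k \<noteq> 0" using nonzero i by auto
    then have "(W i k)\<^sup>2 > 0" by simp
    moreover have "(W i k)\<^sup>2 \<le> (\<Sum>k<p. (W i k)\<^sup>2)" using k(1) by (intro member_le_sum) auto
    ultimately have "(\<Sum>k<p. (W i k)\<^sup>2) > 0" by linarith
    then show ?thesis unfolding s_def by simp
  qed
  define u where "u i k = W i k / s i" for i k
  have Wu: "W i k = s i * u i k" if "i < h" for i k using s_pos[OF that] unfolding u_def by simp
  have ortho: "\<forall>i<h. \<forall>j<h. dotp p (u i) (u j) = (if i = j then 1 else 0)"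
  proof (intro allI impI)
    fix i j assume i: "i < h" and j: "j < h"
    have "dotp p (u i) (u j) = (\<Sum>k<p. W i k * W j k) / (s i * s j)"
      unfolding dotp_def u_def by (simp add: sum_divide_distrib)
    then show "dotp p (u i) (u j) = (if i = j then 1 else 0)"
      using orth i j s_pos[OF i] s_sq[of i] by (auto simp: power2_eq_square)
  qed
  have s_ab: "s i \<in> {\<alpha>..\<beta>}" if i: "i < h" for i
  proof -
    have "s i \<in> singular_values h p W"
      unfolding singular_values_def
    proof (intro CollectI conjI exI[of _ "ev i"])
      show "0 \<le> s i" using s_pos[OF i] by simp
      show "\<exists>i'<h. ev i i' \<noteq> 0" using i by (auto simp: ev_def)
      show "\<forall>i'<h. (\<Sum>j<h. (\<Sum>k<p. W i' k * W j k) * ev i j) = (s i)\<^sup>2 * ev i i'"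
      proof (intro allI impI)
        fix i' assume i': "i' < h"
        have "(\<Sum>j<h. (\<Sum>k<p. W i' k * W j k) * ev i j) = (\<Sum>j<h. if j = i then (\<Sum>k<p. W i' k * W j k) else 0)"
          by (intro sum.cong) (auto simp: ev_def)
        also have "\<dots> = (\<Sum>k<p. W i' k * W i k)" using i by (simp add: sum.delta)
        also have "\<dots> = (s i)\<^sup>2 * ev i i'"
          using orth i i' s_sq[of i] by (auto simp: ev_def power2_eq_square)
        finally show "(\<Sum>j<h. (\<Sum>k<p. W i' k * W j k) * ev i j) = (s i)\<^sup>2 * ev i i'" .
      qed
    qed
    then show ?thesis using sv by auto
  qed
  obtain T where T: "good p T" "\<forall>i<h. agree p (T (u i)) (ev i)" using ortho_T[OF hp ortho] by blast
  have Tdot: "dotp p (T x) (T y) = dotp p x y" for x y using T(1) unfolding good_def by blast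
  have lin: "(\<Sum>k<p. W i k * x k) = s i * T x i" if i: "i < h" for i x
  proof -
    have "(\<Sum>k<p. W i k * x k) = s i * dotp p (u i) x"
      unfolding dotp_def using Wu[OF i] by (simp add: sum_distrib_left mult.assoc)
    also have "dotp p (u i) x = dotp p (T (u i)) (T x)" using Tdot by simp
    also have "\<dots> = dotp p (ev i) (T x)" using agree_dotp T(2) i by blast
    also have "\<dots> = T x i"
    proof -
      have ip: "i < p" using i hp by simp
      show ?thesis using dotp_ev[OF ip, of "T x"] dotp_comm[of p "ev i" "T x"] by simp
    qed
    finally show ?thesis .
  qed
  define H where "H i t = deriv \<sigma> (s i * t)" for i t
  have etaH: "eta \<sigma> (s i) = H i" for i unfolding eta_def[abs_def] H_def by simp
  have dm: "deriv \<sigma> \<in> borel_measurable borel" by (rule deriv_measurable[OF diff])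
  have hH: "integrable std_normal (\<lambda>t. H m t ^ a * t ^ b)" if "m < h" "a \<le> 2" "b \<le> 2" for m a b
  proof (rule integrable_eta_pow[OF _ _ _ that(2,3)])
    show "H m \<in> borel_measurable borel" unfolding H_def[abs_def] using dm by measurable
    show "integrable std_normal (\<lambda>t. (H m t)\<^sup>2)"
      using moments s_ab[OF that(1)] unfolding etaH[symmetric] by (auto dest!: bspec[of _ _ "s m"] spec[of _ 0])
    show "integrable std_normal (\<lambda>t. (t ^ 2 * H m t)\<^sup>2)"
      using moments s_ab[OF that(1)] unfolding etaH[symmetric] by auto
  qed
  define tt where "tt j k = T (ev j) k" for j k
  have xj: "x j = (\<Sum>k<p. tt j k * T x k)" if j: "j < p" for x j
  proof -
    have "x j = dotp p x (ev j)" using dotp_ev[OF j] by simp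
    also have "\<dots> = dotp p (T x) (T (ev j))" using Tdot by simp
    also have "\<dots> = (\<Sum>k<p. tt j k * T x k)" unfolding dotp_def tt_def by (simp add: mult.commute)
    finally show ?thesis .
  qed
  define Y where "Y a y = (\<Sum>k<p. tt (a mod p) k * Bp H p (a div p) p k p y)" for a y
  have divmod: "a div p < h" "a mod p < p" if a: "a < h * p" for a
  proof -
    have p0: "p > 0" using a by (cases p) auto
    show "a mod p < p" using p0 by simp
    show "a div p < h" using a p0 by (simp add: div_less_iff_less_mult mult.commute)
  qed
  have ZY: "kron_feature p \<sigma> W a x = Y a (T x)" if a: "a < h * p" for a x
  proof -
    define i where "i = a div p"
    define j where "j = a mod p"
    have i: "i < h" and j: "j < p" using divmod[OF a] unfolding i_def j_def by auto
    have ip: "i < p" using i hp by simp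
    have "kron_feature p \<sigma> W a x = deriv \<sigma> (\<Sum>k<p. W i k * x k) * x j"
      unfolding kron_feature_def i_def j_def ..
    also have "\<dots> = H i (T x i) * (\<Sum>k<p. tt j k * T x k)"
      unfolding lin[OF i] xj[OF j] H_def ..
    also have "\<dots> = (\<Sum>k<p. tt j k * Bp H p i p k p (T x))"
      using ip by (simp add: Bp_eq1 sum_distrib_left algebra_simps)
    finally show ?thesis unfolding Y_def i_def j_def .
  qed
  have iB: "integrable (gauss_vec p) (Bp H p i j k l)" if "i < h" "j < h \<or> p \<le> j" for i j k l
    by (rule Bp_int_E(1)[of h H]) (use hH that in auto)
  have EBi: "integral\<^sup>L (gauss_vec p) (Bp H p i j k l) = (\<Prod>m<p. KK H m (na i j m) (na k l m))"
    if "i < h" "j < h \<or> p \<le> j" for i j k l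
    by (rule Bp_int_E(2)[of h H]) (use hH that in auto)
  have iY: "integrable (gauss_vec p) (Y a)" if a: "a < h * p" for a
    unfolding Y_def[abs_def] using divmod[OF a] by (intro Bochner_Integration.integrable_sum integrable_mult_right iB) auto
  have YY: "Y a y * Y b y = (\<Sum>k<p. \<Sum>l<p. (tt (a mod p) k * tt (b mod p) l) * Bp H p (a div p) (b div p) k l y)"
    if a: "a < h * p" and b: "b < h * p" for a b y
  proof -
    have ia: "a div p < p" and ib: "b div p < p" using divmod[OF a] divmod[OF b] hp by auto
    show ?thesis unfolding Y_def sum_product
      by (intro sum.cong refl) (simp add: Bp_eq1 Bp_eq ia ib algebra_simps)
  qed
  have iYY: "integrable (gauss_vec p) (\<lambda>y. Y a y * Y b y)" if a: "a < h * p" and b: "b < h * p" for a b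
    unfolding YY[OF a b] using divmod[OF a] divmod[OF b]
    by (intro Bochner_Integration.integrable_sum integrable_mult_right iB) auto
  have iZ: "integrable (gauss_vec p) (kron_feature p \<sigma> W a)" and EZ: "integral\<^sup>L (gauss_vec p) (kron_feature p \<sigma> W a) = integral\<^sup>L (gauss_vec p) (Y a)"
    if a: "a < h * p" for a
  proof -
    have e: "kron_feature p \<sigma> W a = (\<lambda>x. Y a (T x))" using ZY[OF a] by auto
    show "integrable (gauss_vec p) (kron_feature p \<sigma> W a)" unfolding e by (rule good_transfer(1)[OF T(1) iY[OF a]])
    show "integral\<^sup>L (gauss_vec p) (kron_feature p \<sigma> W a) = integral\<^sup>L (gauss_vec p) (Y a)"
      unfolding e by (rule good_transfer(2)[OF T(1) iY[OF a]])
  qed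
  have iZZ: "integrable (gauss_vec p) (\<lambda>x. kron_feature p \<sigma> W a x * kron_feature p \<sigma> W b x)"
    if a: "a < h * p" and b: "b < h * p" for a b
    using good_transfer(1)[OF T(1) iYY[OF a b]] by (simp add: ZY[OF a] ZY[OF b])
  show ?thesis unfolding loewner_ge_scalar_def
  proof (intro allI)
    fix v :: "nat \<Rightarrow> real"
    define N where "N = h * p"
    define z where "z = zeta \<sigma> \<alpha> \<beta>"
    let ?Z = "kron_feature p \<sigma> W"
    let ?C = "cov_matrix (gauss_vec p) ?Z"
    have qf1: "(\<Sum>a<N. \<Sum>b<N. v a * (?C a b - (if a = b then z else 0)) * v b)
       = (\<Sum>a<N. \<Sum>b<N. v a * v b * (integral\<^sup>L (gauss_vec p) (\<lambda>x. ?Z a x * ?Z b x) - integral\<^sup>L (gauss_vec p) (?Z a) * integral\<^sup>L (gauss_vec p) (?Z b)))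
         - z * (\<Sum>a<N. (v a)\<^sup>2)"
    proof -
      have "(\<Sum>a<N. \<Sum>b<N. v a * (?C a b - (if a = b then z else 0)) * v b)
          = (\<Sum>a<N. (\<Sum>b<N. v a * v b * ?C a b) - (\<Sum>b<N. if b = a then z * (v a)\<^sup>2 else 0))"
      proof (rule sum.cong[OF refl])
        fix a assume a: "a \<in> {..<N}"
        have "(\<Sum>b<N. v a * (?C a b - (if a = b then z else 0)) * v b)
           = (\<Sum>b<N. v a * v b * ?C a b - (if b = a then z * (v a)\<^sup>2 else 0))"
          by (intro sum.cong refl) (auto simp: algebra_simps power2_eq_square)
        also have "\<dots> = (\<Sum>b<N. v a * v b * ?C a b) - (\<Sum>b<N. if b = a then z * (v a)\<^sup>2 else 0)"
          by (rule sum_subtractf)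
        finally show "(\<Sum>b<N. v a * (?C a b - (if a = b then z else 0)) * v b)
           = (\<Sum>b<N. v a * v b * ?C a b) - (\<Sum>b<N. if b = a then z * (v a)\<^sup>2 else 0)" .
      qed
      also have "\<dots> = (\<Sum>a<N. \<Sum>b<N. v a * v b * ?C a b) - (\<Sum>a<N. z * (v a)\<^sup>2)"
        by (simp add: sum_subtractf)
      finally show ?thesis unfolding cov_matrix_def by (simp add: sum_distrib_left)
    qed
    have vl: "(\<Sum>a<N. \<Sum>b<N. v a * v b * (integral\<^sup>L (gauss_vec p) (\<lambda>x. ?Z a x * ?Z b x) - integral\<^sup>L (gauss_vec p) (?Z a) * integral\<^sup>L (gauss_vec p) (?Z b)))
      = integral\<^sup>L (gauss_vec p) (\<lambda>x. (\<Sum>a<N. v a * ?Z a x)\<^sup>2) - (integral\<^sup>L (gauss_vec p) (\<lambda>x. \<Sum>a<N. v a * ?Z a x))\<^sup>2"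
      by (rule var_lin) (use iZ iZZ in \<open>auto simp: N_def\<close>)
    define c where "c i k = (\<Sum>j<p. v (i * p + j) * tt j k)" for i k
    define G where "G y = (\<Sum>i<h. \<Sum>k<p. c i k * Bp H p i p k p y)" for y
    have sumZ: "(\<Sum>a<N. v a * ?Z a x) = G (T x)" for x
    proof -
      have "(\<Sum>a<N. v a * ?Z a x) = (\<Sum>a<N. v a * Y a (T x))"
        by (intro sum.cong refl) (simp add: ZY N_def)
      also have "\<dots> = (\<Sum>i<h. \<Sum>j<p. v (i * p + j) * Y (i * p + j) (T x))" unfolding N_def by (rule sum_reindex_hp)
      also have "\<dots> = (\<Sum>i<h. \<Sum>j<p. \<Sum>k<p. v (i * p + j) * tt j k * Bp H p i p k p (T x))"
      proof (intro sum.cong refl)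
        fix i j assume i: "i \<in> {..<h}" and j: "j \<in> {..<p}"
        have "(i * p + j) div p = i" "(i * p + j) mod p = j" using j by auto
        then show "v (i * p + j) * Y (i * p + j) (T x) = (\<Sum>k<p. v (i * p + j) * tt j k * Bp H p i p k p (T x))"
          unfolding Y_def by (simp add: sum_distrib_left mult.assoc)
      qed
      also have "\<dots> = G (T x)" unfolding G_def c_def
      proof (rule sum.cong[OF refl])
        fix i assume "i \<in> {..<h}"
        show "(\<Sum>j<p. \<Sum>k<p. v (i * p + j) * tt j k * Bp H p i p k p (T x)) = (\<Sum>k<p. (\<Sum>j<p. v (i * p + j) * tt j k) * Bp H p i p k p (T x))"
          by (subst sum.swap) (simp add: sum_distrib_right)
      qed
      finally show ?thesis .
    qed
    have iB1: "integrable (gauss_vec p) (Bp H p i p k p)" if "i \<in> {..<h}" for i k using iB that by auto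
    have iG: "integrable (gauss_vec p) G" and EG: "integral\<^sup>L (gauss_vec p) G = (\<Sum>i<h. \<Sum>k<p. c i k * integral\<^sup>L (gauss_vec p) (Bp H p i p k p))"
    proof -
      have e: "G = (\<lambda>y. \<Sum>i<h. \<Sum>k<p. c i k * (\<lambda>i k. Bp H p i p k p) i k y)" unfolding G_def[abs_def] by simp
      show "integrable (gauss_vec p) G" unfolding e by (rule integral_sum2(1)) (use iB1 in auto)
      show "integral\<^sup>L (gauss_vec p) G = (\<Sum>i<h. \<Sum>k<p. c i k * integral\<^sup>L (gauss_vec p) (Bp H p i p k p))"
        unfolding e by (subst integral_sum2(2)) (use iB1 in auto)
    qed
    have G2: "(G y)\<^sup>2 = (\<Sum>i<h. \<Sum>k<p. \<Sum>j<h. \<Sum>l<p. c i k * c j l * Bp H p i j k l y)" for y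
    proof -
      have "(G y)\<^sup>2 = (\<Sum>i<h. \<Sum>k<p. \<Sum>j<h. \<Sum>l<p. (c i k * Bp H p i p k p y) * (c j l * Bp H p j p l p y))"
        unfolding G_def power2_eq_square sum_product
        apply (rule sum.cong[OF refl])
        apply (rule sum.swap)
        done
      also have "\<dots> = (\<Sum>i<h. \<Sum>k<p. \<Sum>j<h. \<Sum>l<p. c i k * c j l * Bp H p i j k l y)"
      proof (intro sum.cong refl)
        fix i k j l assume i: "i \<in> {..<h}" and k: "k \<in> {..<p}" and j: "j \<in> {..<h}" and l: "l \<in> {..<p}"
        have ip: "i < p" "j < p" using i j hp by auto
        show "(c i k * Bp H p i p k p y) * (c j l * Bp H p j p l p y) = c i k * c j l * Bp H p i j k l y"
          using ip k l by (simp add: Bp_eq1 Bp_eq)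
      qed
      finally show ?thesis .
    qed
    have iG2: "integrable (gauss_vec p) (\<lambda>y. (G y)\<^sup>2)"
      and EG2: "integral\<^sup>L (gauss_vec p) (\<lambda>y. (G y)\<^sup>2) = (\<Sum>i<h. \<Sum>k<p. \<Sum>j<h. \<Sum>l<p. c i k * c j l * integral\<^sup>L (gauss_vec p) (Bp H p i j k l))"
    proof -
      have e: "(\<lambda>y. (G y)\<^sup>2) = (\<lambda>y. \<Sum>i<h. \<Sum>k<p. \<Sum>j<h. \<Sum>l<p. c i k * c j l * (\<lambda>i k j l. Bp H p i j k l) i k j l y)"
        unfolding G2 by simp
      show "integrable (gauss_vec p) (\<lambda>y. (G y)\<^sup>2)" unfolding e by (rule integral_sum4(1)) (use iB in auto)
      show "integral\<^sup>L (gauss_vec p) (\<lambda>y. (G y)\<^sup>2) = (\<Sum>i<h. \<Sum>k<p. \<Sum>j<h. \<Sum>l<p. c i k * c j l * integral\<^sup>L (gauss_vec p) (Bp H p i j k l))"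
        unfolding e by (subst integral_sum4(2)) (use iB in auto)
    qed
    have TG2: "integral\<^sup>L (gauss_vec p) (\<lambda>x. (\<Sum>a<N. v a * ?Z a x)\<^sup>2) = integral\<^sup>L (gauss_vec p) (\<lambda>y. (G y)\<^sup>2)"
      using good_transfer(2)[OF T(1) iG2] by (simp add: sumZ)
    have TG: "integral\<^sup>L (gauss_vec p) (\<lambda>x. \<Sum>a<N. v a * ?Z a x) = integral\<^sup>L (gauss_vec p) G"
      using good_transfer(2)[OF T(1) iG] by (simp add: sumZ)
    define gg where "gg i k = (if k = i then KK H i 1 2 else KK H i 1 0)" for i k
    define Dd where "Dd i = KK H i 2 2 - (KK H i 1 1)\<^sup>2 - (KK H i 1 2)\<^sup>2" for i
    define V where "V i = KK H i 2 0 - (KK H i 1 0)\<^sup>2" for i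
    define b where "b i = KK H i 1 1" for i
    have EBeq: "EBform H i j k l = EBf gg Dd V b i j k l" for i j k l
      unfolding EBform_def EBf_def gg_def Dd_def V_def b_def by simp
    have EGv: "integral\<^sup>L (gauss_vec p) G = (\<Sum>i<h. \<Sum>k<p. c i k * (if k = i then b i else 0))"
      unfolding EG
    proof (intro sum.cong refl)
      fix i k assume i: "i \<in> {..<h}" and k: "k \<in> {..<p}"
      have ip: "i < p" using i hp by auto
      have "integral\<^sup>L (gauss_vec p) (Bp H p i p k p) = (\<Prod>m<p. KK H m (na i p m) (na k p m))"
        using EBi[of i p k p] i by auto
      also have "\<dots> = (if k = i then b i else 0)" unfolding b_def using EB1[OF ip] k by auto
      finally show "c i k * integral\<^sup>L (gauss_vec p) (Bp H p i p k p) = c i k * (if k = i then b i else 0)" by simp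
    qed
    have EG2v: "integral\<^sup>L (gauss_vec p) (\<lambda>y. (G y)\<^sup>2) = (\<Sum>i<h. \<Sum>k<p. \<Sum>j<h. \<Sum>l<p. c i k * c j l * EBf gg Dd V b i j k l)"
      unfolding EG2
    proof (intro sum.cong refl)
      fix i k j l assume i: "i \<in> {..<h}" and k: "k \<in> {..<p}" and j: "j \<in> {..<h}" and l: "l \<in> {..<p}"
      have ip: "i < p" "j < p" using i j hp by auto
      have "integral\<^sup>L (gauss_vec p) (Bp H p i j k l) = (\<Prod>m<p. KK H m (na i j m) (na k l m))"
        using EBi[of i j k l] i j by auto
      also have "\<dots> = EBf gg Dd V b i j k l" unfolding EBeq[symmetric] using EB2[OF ip k[simplified] l[simplified]] .
      finally show "c i k * c j l * integral\<^sup>L (gauss_vec p) (Bp H p i j k l) = c i k * c j l * EBf gg Dd V b i j k l" by simp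
    qed
    have KKs: "KK H i 2 2 = Eg (\<lambda>g. (g * H i g)\<^sup>2)" "KK H i 1 1 = Eg (\<lambda>g. g * H i g)"
      "KK H i 1 2 = Eg (\<lambda>g. g\<^sup>2 * H i g)" "KK H i 2 0 = Eg (\<lambda>g. (H i g)\<^sup>2)" "KK H i 1 0 = Eg (H i)" for i
      unfolding KK_def by (simp_all add: power_mult_distrib mult.commute)
    have H2: "\<forall>i<h. theta2 \<sigma> \<alpha> \<beta> \<le> Dd i"
    proof (intro allI impI)
      fix i assume i: "i < h"
      have "theta2 \<sigma> \<alpha> \<beta> \<le> Varg (\<lambda>g. g * eta \<sigma> (s i) g) - (Eg (\<lambda>g. g\<^sup>2 * eta \<sigma> (s i) g))\<^sup>2"
        by (rule theta_bounds(1)[OF diff moments s_ab[OF i] s_ab[OF i]])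
      then show "theta2 \<sigma> \<alpha> \<beta> \<le> Dd i" unfolding etaH Dd_def KKs Varg_def by simp
    qed
    have H1: "\<forall>i<h. \<forall>j<h. theta1 \<sigma> \<alpha> \<beta> \<le> lam (V i) (V j) (b i * b j)"
    proof (intro allI impI)
      fix i j assume i: "i < h" and j: "j < h"
      have "theta1 \<sigma> \<alpha> \<beta> \<le> lam (Varg (eta \<sigma> (s i))) (Varg (eta \<sigma> (s j))) (Eg (\<lambda>g. g * eta \<sigma> (s i) g) * Eg (\<lambda>g. g * eta \<sigma> (s j) g))"
        by (rule theta_bounds(2)[OF diff moments s_ab[OF i] s_ab[OF j]])
      then show "theta1 \<sigma> \<alpha> \<beta> \<le> lam (V i) (V j) (b i * b j)" unfolding etaH V_def b_def KKs Varg_def by simp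
    qed
    have AE: "integral\<^sup>L (gauss_vec p) (\<lambda>y. (G y)\<^sup>2) - (integral\<^sup>L (gauss_vec p) G)\<^sup>2
       \<ge> z * (\<Sum>i<h. \<Sum>k<p. (c i k)\<^sup>2)"
      unfolding EG2v EGv alg_eq[OF hp, where c=c and gg=gg and Dd=Dd and V=V and b=b] z_def zeta_def
      by (rule alg_ge[OF hp H2 H1])
    have csq: "(\<Sum>i<h. \<Sum>k<p. (c i k)\<^sup>2) = (\<Sum>a<N. (v a)\<^sup>2)"
    proof -
      have "(\<Sum>k<p. (c i k)\<^sup>2) = (\<Sum>j<p. (v (i * p + j))\<^sup>2)" for i
      proof -
        have tdot: "(\<Sum>k<p. tt j k * tt j' k) = (if j' = j then 1 else 0)" if "j' < p" for j j'
        proof -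
          have "(\<Sum>k<p. tt j k * tt j' k) = dotp p (T (ev j)) (T (ev j'))" unfolding dotp_def tt_def ..
          also have "\<dots> = dotp p (ev j) (ev j')" by (rule Tdot)
          also have "\<dots> = ev j j'" by (rule dotp_ev[OF that])
          finally show ?thesis unfolding ev_def by simp
        qed
        have "(\<Sum>k<p. (c i k)\<^sup>2) = (\<Sum>k<p. \<Sum>j<p. \<Sum>j'<p. v (i * p + j) * v (i * p + j') * (tt j k * tt j' k))"
          unfolding c_def power2_eq_square sum_product by (intro sum.cong refl) (simp add: algebra_simps)
        also have "\<dots> = (\<Sum>j<p. \<Sum>k<p. \<Sum>j'<p. v (i * p + j) * v (i * p + j') * (tt j k * tt j' k))"
          by (rule sum.swap)
        also have "\<dots> = (\<Sum>j<p. \<Sum>j'<p. \<Sum>k<p. v (i * p + j) * v (i * p + j') * (tt j k * tt j' k))"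
          by (rule sum.cong[OF refl], rule sum.swap)
        also have "\<dots> = (\<Sum>j<p. \<Sum>j'<p. v (i * p + j) * v (i * p + j') * (\<Sum>k<p. tt j k * tt j' k))"
          by (simp add: sum_distrib_left)
        also have "\<dots> = (\<Sum>j<p. \<Sum>j'<p. if j' = j then v (i * p + j) * v (i * p + j') else 0)"
          by (intro sum.cong refl) (simp add: tdot)
        also have "\<dots> = (\<Sum>j<p. (v (i * p + j))\<^sup>2)" by (simp add: sum.delta power2_eq_square)
        finally show ?thesis .
      qed
      then show ?thesis unfolding N_def sum_reindex_hp by simp
    qed
    have "0 \<le> (\<Sum>a<N. \<Sum>b<N. v a * (?C a b - (if a = b then z else 0)) * v b)"
      unfolding qf1 vl TG2 TG using AE csq by simp
    then show "0 \<le> (\<Sum>a<h * p. \<Sum>b<h * p. v a * (?C a b - (if a = b then zeta \<sigma> \<alpha> \<beta> else 0)) * v b)"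
      unfolding N_def z_def .
  qed
qed

end
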